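(* Assume the setting in the context and let $m$ be a positive integer. There exist a positive integer $D_0$ and a family $\tilde\Theta=\{\tilde\theta(a)\}_{a\in A}$, each $f(\cdot,\tilde\theta(a))$ a residual network of size $(d,(6^{\alpha}+1)m,D_0,\alpha+1)$, such that $$\mathcal R_{\mathcal D}(\tilde\Theta)\le\frac{1}{(1-\gamma)^2}\Big(256|A|^5\frac{\|r\|_{\mathcal B}^2}{m}+576\,\gamma^2C_T^2(\Delta t)^2|A|^7\|r\|_{\mathcal B}^2\Big)$$ and $\|\tilde\Theta\|_{\mathcal P}\le\frac{24}{1-\gamma}|A|^{7/2}\|r\|_{\mathcal B}$.
   Context: Residual networks: for positive integers $d,m,D,L$, a residual network of size $(d,m,D,L)$ is a function $f(\cdot,\theta):\mathbb R^d\to\mathbb R$, $f(x,\theta)=u^{\top}h^{[L]}$, where $h^{[0]}=Vx$ and $h^{[l]}=h^{[l-1]}+U^{[l]}\sigma(W^{[l]}h^{[l-1]})$ for $l=1,\dots,L$, with $V\in\mathbb R^{D\times d}$, $W^{[l]}\in\mathbb R^{m\times D}$, $U^{[l]}\in\mathbb R^{D\times m}$, $u\in\mathbb R^D$, $\sigma(z)=\max(z,0)$ applied entrywise, and $\theta=(u,V,\{W^{[l]}\}_{l=1}^L,\{U^{[l]}\}_{l=1}^L)$. Its weighted path norm is $\|\theta\|_{\mathcal P}=\big\||u|^{\top}(I+3|U^{[L]}||W^{[L]}|)\cdots(I+3|U^{[1]}||W^{[1]}|)|V|\big\|_1$, where $|\cdot|$ of a matrix/vector is entrywise absolute value and $I$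 is the $D\times D$ identity. For a family $\Theta=\{\theta(a)\}_{a\in A}$ of parameters (one network per action, all of the same size), $f(s,\theta(a))$ denotes the $a$-th network and $\|\Theta\|_{\mathcal P}=\sum_{a\in A}\|\theta(a)\|_{\mathcal P}$. Barron space: for a compact $S\subset\mathbb R^d$, $h:S\to\mathbb R$ is in the Barron space $\mathcal B(S)$ if there is a probability measure $\rho$ on $\mathbb R\times\mathbb R^d$ with $h(x)=\mathbb E_{(u,w)\sim\rho}[u\,\sigma(w^{\top}x)]$ for all $x\in S$; its Barron norm is $\|h\|_{\mathcal B}=\inf_\rho(\mathbb E_{\rho}[u^2\|w\|_1^2])^{1/2}$, the infimum over all such $\rho$. For $r:S\times A\to\mathbb R$ with each $r(\cdot,a)\in\mathcal B(S)$, $\|r\|_{\mathcal B}=(\sum_{a\in A}\|r(\cdot,a)\|_{\mathcal B}^2)^{1/2}$. Setting: $S\subseteq[0,1]^d$ is compact with positive Lebesgue measure (state space); $A$ is a finite action set with $|A|=2^{\alpha}$, $\alpha\ge 0$ an integer, identified with $\{1,\dots,2^\alpha\}$; $\gamma\in(0,1)$. The reward $r:S\times A\to\mathbb R$ satisfies: each $r(\cdot,a)$ is continuous and lies in $\mathcal B(S)$, and $|r(s,a)|\le 1$ for all $(s,a)$. The transition $\tilde g:S\times A\times[0,\infty)\to S$ satisfies $\tilde g(s,a,0)=s$, $\tilde g(\tilde g(s,a,t),a,t')=\tilde g(s,a,t+t')$ for $t,t'\ge0$, and there is $C_T>0$ with $\|\tilde g(s,a,t)-\tilde g(s,a,t+\Delta)\|_\infty\le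 C_T\Delta$ for all $s\in S,a\in A,t\ge0,\Delta\in(0,1)$. A time step $\Delta t\in(0,1)$ is fixed. $\mathcal D$ is the uniform distribution on $S$ and $\mathcal U$ the uniform distribution on $A$. The Bellman optimal loss is $\mathcal R_{\mathcal D}(\Theta)=\frac12\mathbb E_{s\sim\mathcal D,a\sim\mathcal U}\big(f(s,\theta(a))-r(s,a)-\gamma\max_{a'\in A}f(s',\theta(a'))\big)^2$ with $s'=\tilde g(s,a,\Delta t)$. *)

theory Defs
  imports "HOL-Analysis.Analysis" "HOL-Probability.Probability"
begin

definition relu :: "real \<Rightarrow> real" where
  "relu z = max z 0"

text \<open>Parameters of a residual network with input space real^'d.
  u : D-vector (entries indexed 0..D-1), V : D x d matrix (rows 0..D-1, columns 'd),
  W l : m x D matrix of layer l (l = 1..L), U l : D x m matrix of layer l.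
  Entries outside these index ranges are ignored by every definition below.\<close>
datatype 'd resparam = ResParam
  (rp_u: "nat \<Rightarrow> real")
  (rp_V: "nat \<Rightarrow> 'd \<Rightarrow> real")
  (rp_W: "nat \<Rightarrow> nat \<Rightarrow> nat \<Rightarrow> real")
  (rp_U: "nat \<Rightarrow> nat \<Rightarrow> nat \<Rightarrow> real")

primrec res_hidden :: "nat \<Rightarrow> nat \<Rightarrow> ('d::finite) resparam \<Rightarrow> real^'d \<Rightarrow> nat \<Rightarrow> nat \<Rightarrow> real" where
  "res_hidden m D \<theta> x 0 = (\<lambda>i. \<Sum>j\<in>UNIV. rp_V \<theta> i j * x $ j)"
| "res_hidden m D \<theta> x (Suc l) = (\<lambda>i. res_hidden m D \<theta> x l i +
      (\<Sum>k<m. rp_U \<theta> (Suc l) i k *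
          relu (\<Sum>p<D. rp_W \<theta> (Suc l) k p * res_hidden m D \<theta> x l p)))"

definition resnet :: "nat \<Rightarrow> nat \<Rightarrow> nat \<Rightarrow> ('d::finite) resparam \<Rightarrow> real^'d \<Rightarrow> real" where
  "resnet m D L \<theta> x = (\<Sum>i<D. rp_u \<theta> i * res_hidden m D \<theta> x L i)"

text \<open>The D x d matrix (I+3|U^[l]||W^[l]|)...(I+3|U^[1]||W^[1]|)|V|.\<close>
primrec pn_mat :: "nat \<Rightarrow> nat \<Rightarrow> ('d::finite) resparam \<Rightarrow> nat \<Rightarrow> nat \<Rightarrow> 'd \<Rightarrow> real" where
  "pn_mat m D \<theta> 0 = (\<lambda>i j. \<bar>rp_V \<theta> i j\<bar>)"
| "pn_mat m D \<theta> (Suc l) = (\<lambda>i j. pn_mat m D \<theta> l i j +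
      3 * (\<Sum>p<D. (\<Sum>k<m. \<bar>rp_U \<theta> (Suc l) i k\<bar> * \<bar>rp_W \<theta> (Suc l) k p\<bar>) * pn_mat m D \<theta> l p j))"

definition path_norm :: "nat \<Rightarrow> nat \<Rightarrow> nat \<Rightarrow> ('d::finite) resparam \<Rightarrow> real" where
  "path_norm m D L \<theta> = (\<Sum>j\<in>UNIV. \<bar>\<Sum>i<D. \<bar>rp_u \<theta> i\<bar> * pn_mat m D \<theta> L i j\<bar>)"

definition family_path_norm :: "nat \<Rightarrow> nat \<Rightarrow> nat \<Rightarrow> ('a::finite \<Rightarrow> ('d::finite) resparam) \<Rightarrow> real" where
  "family_path_norm m D L \<Theta> = (\<Sum>a\<in>UNIV. path_norm m D L (\<Theta> a))"

definition l1norm :: "real^'d::finite \<Rightarrow> real" where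
  "l1norm w = (\<Sum>j\<in>UNIV. \<bar>w $ j\<bar>)"

definition barron_repr :: "(real^'d::finite) set \<Rightarrow> (real^'d \<Rightarrow> real) \<Rightarrow> (real \<times> (real^'d)) measure \<Rightarrow> bool" where
  "barron_repr S h \<rho> \<longleftrightarrow> prob_space \<rho> \<and> sets \<rho> = sets borel \<and>
     (\<forall>x\<in>S. integrable \<rho> (\<lambda>(u,w). u * relu (w \<bullet> x)) \<and>
             h x = (\<integral>(u,w). u * relu (w \<bullet> x) \<partial>\<rho>))"

definition barron_moment :: "(real \<times> (real^'d::finite)) measure \<Rightarrow> ennreal" where
  "barron_moment \<rho> = (\<integral>\<^sup>+(u,w). ennreal (u\<^sup>2 * (l1norm w)\<^sup>2) \<partial>\<rho>)"

definition barron_space :: "(real^'d::finite) set \<Rightarrow> (real^'d \<Rightarrow> real) \<Rightarrow> bool" where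
  "barron_space S h \<longleftrightarrow> (\<exists>\<rho>. barron_repr S h \<rho> \<and> barron_moment \<rho> < \<infinity>)"

definition barron_norm :: "(real^'d::finite) set \<Rightarrow> (real^'d \<Rightarrow> real) \<Rightarrow> real" where
  "barron_norm S h = sqrt (Inf {enn2real (barron_moment \<rho>) | \<rho>. barron_repr S h \<rho> \<and> barron_moment \<rho> < \<infinity>})"

definition reward_barron_norm :: "(real^'d::finite) set \<Rightarrow> (real^'d \<Rightarrow> 'a::finite \<Rightarrow> real) \<Rightarrow> real" where
  "reward_barron_norm S r = sqrt (\<Sum>a\<in>UNIV. (barron_norm S (\<lambda>s. r s a))\<^sup>2)"

definition bellman_loss ::
  "(real^'d::finite) set \<Rightarrow> (real^'d \<Rightarrow> 'a::finite \<Rightarrow> real) \<Rightarrow> (real^'d \<Rightarrow> 'a \<Rightarrow> real \<Rightarrow> real^'d)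
   \<Rightarrow> real \<Rightarrow> real \<Rightarrow> nat \<Rightarrow> nat \<Rightarrow> nat \<Rightarrow> ('a \<Rightarrow> 'd resparam) \<Rightarrow> ennreal" where
  "bellman_loss S r g \<gamma> \<Delta>t m D L \<Theta> =
     ennreal (1 / (2 * real CARD('a))) *
     (\<Sum>a\<in>UNIV. \<integral>\<^sup>+ s. ennreal ((resnet m D L (\<Theta> a) s - r s a
          - \<gamma> * Max (range (\<lambda>a'. resnet m D L (\<Theta> a') (g s a \<Delta>t))))\<^sup>2) \<partial>(uniform_measure lborel S))"

end

theory Submission
  imports Defs
begin


definition rh :: "nat \<Rightarrow> (nat\<Rightarrow>nat\<Rightarrow>real) \<Rightarrow> (nat\<Rightarrow>nat\<Rightarrow>real^'d::finite) \<Rightarrow> nat \<Rightarrow> real^'d \<Rightarrow> real" where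
 "rh m UU WW j x = (\<Sum>k<m. UU j k * relu (WW j k \<bullet> x)) / real m"

definition netp :: "nat \<Rightarrow> nat \<Rightarrow> nat \<Rightarrow> real \<Rightarrow> (nat\<Rightarrow>nat\<Rightarrow>real) \<Rightarrow> (nat\<Rightarrow>nat\<Rightarrow>real^'d::finite) \<Rightarrow> 'd resparam" where
 "netp \<alpha> m ja c UU WW = ResParam
   (\<lambda>i. (if i = 0 then c else 0) + (if i = 2^\<alpha> then 1 else 0))
   (\<lambda>i j. if 2^\<alpha> < i then WW ((i - 2^\<alpha> - 1) div m) ((i - 2^\<alpha> - 1) mod m) $ j else 0)
   (\<lambda>l k p. if l = 1 then (if k < 2^\<alpha>*m \<and> p = 2^\<alpha>+1+k then 1 else 0) else
        (if k < 2^(\<alpha>-(l-1)) then (if p = 2^(l-1)*k + 2^(l-2) then 1 else 0) - (if p = 2^(l-1)*k then 1 else 0) else 0))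
   (\<lambda>l i k. if l = 1 then (if k < 2^\<alpha>*m then UU (k div m) (k mod m) / real m *
          ((if i = k div m then 1 else 0) + (if i = 2^\<alpha> \<and> k div m = ja then 1 else 0)) else 0)
        else (if k < 2^(\<alpha>-(l-1)) \<and> i = 2^(l-1)*k then 1 else 0))"

lemma sum_divmod:
  fixes n m :: nat
  assumes "0 < m"
  shows "(\<Sum>k<n*m. f (k div m) (k mod m)) = (\<Sum>j<n. \<Sum>k<m. f j k)"
proof -
  have "(\<Sum>k<n*m. f (k div m) (k mod m)) = (\<Sum>i<n. \<Sum>j<m. f ((j + i*m) div m) ((j + i*m) mod m))"
    by (rule sum_mult_product)
  also have "\<dots> = (\<Sum>j<n. \<Sum>k<m. f j k)"
    using assms by (intro sum.cong refl) simp
  finally show ?thesis .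
qed

primrec mxt :: "(nat \<Rightarrow> real) \<Rightarrow> nat \<Rightarrow> nat \<Rightarrow> real" where
  "mxt L 0 j = L j"
| "mxt L (Suc t) j = max (mxt L t (2*j)) (mxt L t (2*j+1))"

definition pii :: "nat \<Rightarrow> (nat\<Rightarrow>nat\<Rightarrow>real) \<Rightarrow> (nat\<Rightarrow>nat\<Rightarrow>real^'d::finite) \<Rightarrow> nat \<Rightarrow> 'd \<Rightarrow> real" where
  "pii m UU WW i j' = 3 * (\<Sum>k<m. \<bar>UU i k\<bar> / real m * \<bar>WW i k $ j'\<bar>)"

lemma pii_nonneg: "0 \<le> pii m UU WW i j'"
  unfolding pii_def by (intro mult_nonneg_nonneg sum_nonneg) auto

lemma if01_mult: "(if P then 1 else 0) * (a::real) = (if P then a else 0)" by simp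

lemma relu_max: "a + relu (b - a) = max a (b::real)"
  by (simp add: relu_def max_def)

lemma pow_facts:
  assumes "t \<le> \<alpha>" "j < 2^(\<alpha>-t)"
  shows "(2::nat)^t * j + 2^t \<le> 2^\<alpha>"
proof -
  have "Suc j \<le> 2^(\<alpha>-t)" using assms by simp
  hence "(2::nat)^t * Suc j \<le> 2^t * 2^(\<alpha>-t)" by (rule mult_le_mono2)
  also have "\<dots> = 2^\<alpha>" using assms by (simp flip: power_add)
  finally show ?thesis by simp
qed

lemma mxt_Max: "mxt L t j = Max (L ` {2^t*j..<2^t*j+2^t})"
proof (induction t arbitrary: j)
  case 0
  then show ?case by simp
next
  case (Suc t)
  have iv: "{(2::nat)^Suc t*j..<2^Suc t*j+2^Suc t} = {2^t*(2*j)..<2^t*(2*j)+2^t} \<union> {2^t*(2*j+1)..<2^t*(2*j+1)+2^t}"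
    by (auto simp: algebra_simps)
  show ?case unfolding iv image_Un
    by (subst Max_Un) (auto simp: Suc.IH)
qed

lemma sum_two_delta:
  fixes a b D :: nat
  assumes "a < D" "b < D"
  shows "(\<Sum>i<D. ((if i = a then c1 else 0) + (if i = b then c2 else 0)) * (f i::real)) = c1 * f a + c2 * f b"
proof -
  have eq: "(\<lambda>i. ((if i = a then c1 else 0) + (if i = b then c2 else 0)) * f i) = (\<lambda>i. (if i = a then c1 * f i else 0) + (if i = b then c2 * f i else 0))"
    by (auto simp: distrib_right)
  show ?thesis unfolding eq sum.distrib using assms by (simp only: sum.delta finite_lessThan lessThan_iff if_True)
qed

lemma pn_mat_nonneg: "0 \<le> pn_mat m D \<theta> l i j"
  by (induction l arbitrary: i) (auto intro!: add_nonneg_nonneg mult_nonneg_nonneg sum_nonneg)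

context
  fixes \<alpha> m ja :: nat and c :: real and UU :: "nat\<Rightarrow>nat\<Rightarrow>real" and WW :: "nat\<Rightarrow>nat\<Rightarrow>real^'d::finite"
    and mw D :: nat and x :: "real^'d"
  assumes m_pos: "0 < m" and ja: "ja < 2^\<alpha>" and mw: "mw = (6^\<alpha>+1)*m" and DD: "D = 2^\<alpha>+1+2^\<alpha>*m"
begin

abbreviation "nN \<equiv> (2::nat)^\<alpha>"
abbreviation "thN \<equiv> netp \<alpha> m ja c UU WW"
abbreviation "hN \<equiv> res_hidden mw D thN x"

lemma nm_le_mw: "nN*m \<le> mw"
proof -
  have "(2::nat)^\<alpha> \<le> 6^\<alpha>" by (simp add: power_mono)
  hence "nN*m \<le> 6^\<alpha>*m" by (rule mult_le_mono1)
  also have "\<dots> \<le> mw" using mw by simp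
  finally show ?thesis .
qed

lemma W1: "rp_W thN 1 k p = (if k < nN*m \<and> p = nN+1+k then 1 else 0)"
  by (simp add: netp_def)
lemma W1': "rp_W thN (Suc 0) k p = (if k < nN*m \<and> p = nN+1+k then 1 else 0)"
  by (simp add: netp_def)
lemma U1: "rp_U thN 1 i k = (if k < nN*m then UU (k div m) (k mod m) / real m *
          ((if i = k div m then 1 else 0) + (if i = nN \<and> k div m = ja then 1 else 0)) else 0)"
  by (simp add: netp_def)
lemmas U1' = U1[simplified]
lemma Wt: "0 < t \<Longrightarrow> rp_W thN (Suc t) k p = (if k < 2^(\<alpha>-t) then (if p = 2^t*k + 2^(t-1) then 1 else 0) - (if p = 2^t*k then 1 else 0) else 0)"
  by (simp add: netp_def numeral_2_eq_2)
lemma Ut: "0 < t \<Longrightarrow> rp_U thN (Suc t) i k = (if k < 2^(\<alpha>-t) \<and> i = 2^t*k then 1 else 0)"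
  by (simp add: netp_def)
lemma uu: "rp_u thN i = (if i = 0 then c else 0) + (if i = nN then 1 else 0)"
  by (simp add: netp_def)
lemma VV: "rp_V thN i j = (if nN < i then WW ((i - nN - 1) div m) ((i - nN - 1) mod m) $ j else 0)"
  by (simp add: netp_def)

lemma h0_feat: "q < nN*m \<Longrightarrow> hN 0 (nN+1+q) = WW (q div m) (q mod m) \<bullet> x"
  by (simp add: netp_def inner_vec_def)

lemma h0_low: "i \<le> nN \<Longrightarrow> hN 0 i = 0"
  by (simp add: netp_def)

lemma h1: assumes "i \<le> nN"
  shows "hN 1 i = (\<Sum>j<nN. \<Sum>k<m. UU j k / real m * ((if i = j then 1 else 0) + (if i = nN \<and> j = ja then 1 else 0))
            * relu (WW j k \<bullet> x))"
proof -
  have inner: "(\<Sum>p<D. rp_W thN 1 k p * hN 0 p) = hN 0 (nN+1+k)" if "k < nN*m" for k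
  proof -
    have "nN+1+k < D" using that DD by simp
    have "(\<Sum>p<D. rp_W thN 1 k p * hN 0 p) = (\<Sum>p<D. if p = nN+1+k then hN 0 p else 0)"
      by (rule sum.cong) (use that in \<open>auto simp: W1 W1'\<close>)
    thus ?thesis using \<open>nN+1+k < D\<close> by simp
  qed
  have "hN 1 i = hN 0 i + (\<Sum>k<mw. rp_U thN 1 i k * relu (\<Sum>p<D. rp_W thN 1 k p * hN 0 p))"
    by (simp del: res_hidden.simps(1) add: One_nat_def)
  also have "hN 0 i = 0" using assms h0_low by simp
  also have "(\<Sum>k<mw. rp_U thN 1 i k * relu (\<Sum>p<D. rp_W thN 1 k p * hN 0 p))
      = (\<Sum>k<nN*m. rp_U thN 1 i k * relu (\<Sum>p<D. rp_W thN 1 k p * hN 0 p))"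
    by (rule sum.mono_neutral_right) (use nm_le_mw in \<open>auto simp: U1 U1'\<close>)
  also have "\<dots> = (\<Sum>k<nN*m. (\<lambda>j k. UU j k / real m * ((if i = j then 1 else 0) + (if i = nN \<and> j = ja then 1 else 0))
            * relu (WW j k \<bullet> x)) (k div m) (k mod m))"
  proof (rule sum.cong[OF refl])
    fix k assume k: "k \<in> {..<nN*m}"
    show "rp_U thN 1 i k * relu (\<Sum>p<D. rp_W thN 1 k p * hN 0 p) = (\<lambda>j k. UU j k / real m * ((if i = j then 1 else 0) + (if i = nN \<and> j = ja then 1 else 0))
            * relu (WW j k \<bullet> x)) (k div m) (k mod m)"
      using k by (simp only: inner h0_feat U1 lessThan_iff if_True) 
  qed
  also have "\<dots> = (\<Sum>j<nN. \<Sum>k<m. UU j k / real m * ((if i = j then 1 else 0) + (if i = nN \<and> j = ja then 1 else 0))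
            * relu (WW j k \<bullet> x))" by (rule sum_divmod[OF m_pos])
  finally show ?thesis by simp
qed

lemma h1_leaf: "i < nN \<Longrightarrow> hN 1 i = rh m UU WW i x"
  and h1_n: "hN 1 nN = rh m UU WW ja x"
proof -
  have e: "(\<Sum>k<m. UU j k / real m * (a::real) * relu (WW j k \<bullet> x)) = a * rh m UU WW j x" for j a
    by (simp add: rh_def sum_divide_distrib sum_distrib_left mult_ac)
  show "i < nN \<Longrightarrow> hN 1 i = rh m UU WW i x"
    by (subst h1, simp, simp only: e) (simp add: distrib_right sum.distrib if01_mult)
  show "hN 1 nN = rh m UU WW ja x"
    by (subst h1, simp, simp only: e) (simp add: ja distrib_right sum.distrib if01_mult)
qed

lemma mw_big: "2^(\<alpha>-t) \<le> mw"
proof -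
  have "(2::nat)^(\<alpha>-t) \<le> 2^\<alpha>" by (simp add: power_increasing)
  also have "\<dots> \<le> nN*m" using m_pos by simp
  finally show ?thesis using nm_le_mw by simp
qed

lemma Usum:
  assumes "0 < t" "j < 2^(\<alpha>-t)"
  shows "(\<Sum>k<mw. rp_U thN (Suc t) (2^t*j) k * F k) = F j"
proof -
  have "(\<Sum>k<mw. rp_U thN (Suc t) (2^t*j) k * F k) = (\<Sum>k<mw. if k = j then F k else 0)"
    by (rule sum.cong) (use assms in \<open>auto simp: Ut\<close>)
  also have "\<dots> = F j" using assms mw_big[of t] by simp
  finally show ?thesis .
qed

lemma Usum_abs:
  assumes "0 < t" "j < 2^(\<alpha>-t)"
  shows "(\<Sum>k<mw. \<bar>rp_U thN (Suc t) (2^t*j) k\<bar> * F k) = F j"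
proof -
  have "(\<Sum>k<mw. \<bar>rp_U thN (Suc t) (2^t*j) k\<bar> * F k) = (\<Sum>k<mw. if k = j then F k else 0)"
    by (rule sum.cong) (use assms in \<open>auto simp: Ut\<close>)
  also have "\<dots> = F j" using assms mw_big[of t] by simp
  finally show ?thesis .
qed

lemma Un_zero: "0 < t \<Longrightarrow> t \<le> \<alpha> \<Longrightarrow> rp_U thN (Suc t) nN k = 0"
proof (cases "k < 2^(\<alpha>-t)")
  case True
  assume "0 < t" "t \<le> \<alpha>"
  have "(2::nat)^t * k + 2^t \<le> 2^\<alpha>" by (rule pow_facts) (use True \<open>t \<le> \<alpha>\<close> in auto)
  moreover have "0 < (2::nat)^t" by simp
  ultimately have "nN \<noteq> 2^t*k" by linarith
  thus ?thesis using \<open>0<t\<close> by (simp add: Ut)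
qed (simp add: Ut)

lemma Wsum:
  assumes "0 < t" "t \<le> \<alpha>" "j < 2^(\<alpha>-t)"
  shows "(\<Sum>p<D. rp_W thN (Suc t) j p * F p) = F (2^t*j + 2^(t-1)) - F (2^t*j)"
    and "(\<Sum>p<D. \<bar>rp_W thN (Suc t) j p\<bar> * F p) = F (2^t*j + 2^(t-1)) + F (2^t*j)"
proof -
  have le: "(2::nat)^t * j + 2^t \<le> 2^\<alpha>" by (rule pow_facts) (use assms in auto)
  have "(2::nat)^(t-1) < 2^t" using assms by simp
  hence a1: "2^t*j + 2^(t-1) < D" using le DD by linarith
  have a0: "2^t*j < D" using le DD by linarith
  have ne: "(2::nat)^t*j + 2^(t-1) \<noteq> 2^t*j" by simp
  have "(\<Sum>p<D. rp_W thN (Suc t) j p * F p) = (\<Sum>p<D. (if p = 2^t*j + 2^(t-1) then F p else 0) - (if p = 2^t*j then F p else 0))"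
    by (rule sum.cong) (use assms in \<open>auto simp: Wt\<close>)
  also have "\<dots> = F (2^t*j + 2^(t-1)) - F (2^t*j)"
    using a1 a0 by (simp add: sum_subtractf)
  finally show "(\<Sum>p<D. rp_W thN (Suc t) j p * F p) = F (2^t*j + 2^(t-1)) - F (2^t*j)" .
  have "(\<Sum>p<D. \<bar>rp_W thN (Suc t) j p\<bar> * F p) = (\<Sum>p<D. (if p = 2^t*j + 2^(t-1) then F p else 0) + (if p = 2^t*j then F p else 0))"
    by (rule sum.cong) (use assms ne in \<open>auto simp: Wt\<close>)
  also have "\<dots> = F (2^t*j + 2^(t-1)) + F (2^t*j)"
    using a1 a0 by (simp add: sum.distrib)
  finally show "(\<Sum>p<D. \<bar>rp_W thN (Suc t) j p\<bar> * F p) = F (2^t*j + 2^(t-1)) + F (2^t*j)" .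
qed

lemma ht_step:
  assumes "0 < t" "t \<le> \<alpha>" "j < 2^(\<alpha>-t)"
  shows "hN (Suc t) (2^t*j) = hN t (2^t*j) + relu (hN t (2^t*j + 2^(t-1)) - hN t (2^t*j))"
  using assms by (simp only: res_hidden.simps Usum Wsum)

lemma hn_step:
  assumes "0 < t" "t \<le> \<alpha>"
  shows "hN (Suc t) nN = hN t nN"
  using assms by (simp add: Un_zero)

abbreviation "pnN \<equiv> pn_mat mw D thN"

lemma pn_step:
  assumes "0 < t" "t \<le> \<alpha>" "j < 2^(\<alpha>-t)"
  shows "pnN (Suc t) (2^t*j) j' = pnN t (2^t*j) j' + 3 * (pnN t (2^t*j + 2^(t-1)) j' + pnN t (2^t*j) j')"
proof -
  have "(\<Sum>p<D. (\<Sum>k<mw. \<bar>rp_U thN (Suc t) (2^t*j) k\<bar> * \<bar>rp_W thN (Suc t) k p\<bar>) * pnN t p j')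
     = (\<Sum>p<D. \<bar>rp_W thN (Suc t) j p\<bar> * pnN t p j')"
    by (simp only: Usum_abs assms)
  also have "\<dots> = pnN t (2^t*j + 2^(t-1)) j' + pnN t (2^t*j) j'" by (rule Wsum(2)[OF assms])
  finally show ?thesis by simp
qed

lemma pn_n_step:
  assumes "0 < t" "t \<le> \<alpha>"
  shows "pnN (Suc t) nN j' = pnN t nN j'"
  using assms by (simp add: Un_zero)

lemma pn1:
  assumes "i \<le> nN"
  shows "pnN 1 i j' = 3 * (\<Sum>j<nN. \<Sum>k<m. \<bar>UU j k\<bar> / real m * ((if i = j then 1 else 0) + (if i = nN \<and> j = ja then 1 else 0))
            * \<bar>WW j k $ j'\<bar>)"
proof -
  have p0: "pnN 0 i j' = 0" using assms by (simp add: VV)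
  have swap: "(\<Sum>p<D. (\<Sum>k<mw. \<bar>rp_U thN 1 i k\<bar> * \<bar>rp_W thN 1 k p\<bar>) * pnN 0 p j')
     = (\<Sum>k<mw. \<bar>rp_U thN 1 i k\<bar> * (\<Sum>p<D. \<bar>rp_W thN 1 k p\<bar> * pnN 0 p j'))"
    by (simp add: sum_distrib_right sum_distrib_left mult_ac sum.swap[of _ "{..<D}"])
  have inner: "(\<Sum>p<D. \<bar>rp_W thN 1 k p\<bar> * pnN 0 p j') = pnN 0 (nN+1+k) j'" if "k < nN*m" for k
  proof -
    have "nN+1+k < D" using that DD by simp
    have "(\<Sum>p<D. \<bar>rp_W thN 1 k p\<bar> * pnN 0 p j') = (\<Sum>p<D. if p = nN+1+k then pnN 0 p j' else 0)"
      by (rule sum.cong) (use that in \<open>auto simp: W1 W1' simp del: pn_mat.simps\<close>)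
    thus ?thesis using \<open>nN+1+k < D\<close> by simp
  qed
  have "(\<Sum>k<mw. \<bar>rp_U thN 1 i k\<bar> * (\<Sum>p<D. \<bar>rp_W thN 1 k p\<bar> * pnN 0 p j'))
      = (\<Sum>k<nN*m. \<bar>rp_U thN 1 i k\<bar> * (\<Sum>p<D. \<bar>rp_W thN 1 k p\<bar> * pnN 0 p j'))"
    by (rule sum.mono_neutral_right) (use nm_le_mw in \<open>auto simp: U1 U1'\<close>)
  also have "\<dots> = (\<Sum>k<nN*m. (\<lambda>j k. \<bar>UU j k\<bar> / real m * ((if i = j then 1 else 0) + (if i = nN \<and> j = ja then 1 else 0))
            * \<bar>WW j k $ j'\<bar>) (k div m) (k mod m))"
  proof (rule sum.cong[OF refl])
    fix k assume k: "k \<in> {..<nN*m}"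
    have "\<bar>rp_U thN 1 i k\<bar> = \<bar>UU (k div m) (k mod m)\<bar> / real m * ((if i = k div m then 1 else 0) + (if i = nN \<and> k div m = ja then 1 else 0))"
      using k by (simp add: U1' abs_mult)
    moreover have "pnN 0 (nN+1+k) j' = \<bar>WW (k div m) (k mod m) $ j'\<bar>" by (simp add: VV)
    ultimately show "\<bar>rp_U thN 1 i k\<bar> * (\<Sum>p<D. \<bar>rp_W thN 1 k p\<bar> * pnN 0 p j') = (\<lambda>j k. \<bar>UU j k\<bar> / real m * ((if i = j then 1 else 0) + (if i = nN \<and> j = ja then 1 else 0))
            * \<bar>WW j k $ j'\<bar>) (k div m) (k mod m)"
      using k by (simp only: inner lessThan_iff)
  qed
  also have "\<dots> = (\<Sum>j<nN. \<Sum>k<m. \<bar>UU j k\<bar> / real m * ((if i = j then 1 else 0) + (if i = nN \<and> j = ja then 1 else 0))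
            * \<bar>WW j k $ j'\<bar>)" by (rule sum_divmod[OF m_pos])
  finally have "(\<Sum>p<D. (\<Sum>k<mw. \<bar>rp_U thN 1 i k\<bar> * \<bar>rp_W thN 1 k p\<bar>) * pnN 0 p j') = \<dots>"
    using swap by simp
  moreover have "pnN 1 i j' = pnN 0 i j' + 3 * (\<Sum>p<D. (\<Sum>k<mw. \<bar>rp_U thN 1 i k\<bar> * \<bar>rp_W thN 1 k p\<bar>) * pnN 0 p j')"
    by (simp del: pn_mat.simps(1) add: One_nat_def)
  ultimately show ?thesis using p0 by simp
qed

lemma pn1_leaf: "i < nN \<Longrightarrow> pnN 1 i j' = pii m UU WW i j'"
  and pn1_n: "pnN 1 nN j' = pii m UU WW ja j'"
proof -
  have e: "(\<Sum>k<m. \<bar>UU j k\<bar> / real m * (a::real) * \<bar>WW j k $ j'\<bar>) = a * (pii m UU WW j j' / 3)" for j a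
    by (simp add: pii_def sum_divide_distrib sum_distrib_left mult_ac)
  show "i < nN \<Longrightarrow> pnN 1 i j' = pii m UU WW i j'"
    by (subst pn1, simp, simp only: e) (simp add: distrib_right sum.distrib if01_mult sum_divide_distrib[symmetric])
  show "pnN 1 nN j' = pii m UU WW ja j'"
    by (subst pn1, simp, simp only: e) (simp add: ja distrib_right sum.distrib if01_mult sum_divide_distrib[symmetric])
qed

lemma h_inv:
  "t \<le> \<alpha> \<Longrightarrow> (\<forall>j<2^(\<alpha>-t). hN (Suc t) (2^t*j) = mxt (\<lambda>i. rh m UU WW i x) t j) \<and> hN (Suc t) nN = rh m UU WW ja x"
proof (induction t)
  case 0
  then show ?case using h1_leaf h1_n by simp
next
  case (Suc t)
  have IH: "\<forall>j<2^(\<alpha>-t). hN (Suc t) (2^t*j) = mxt (\<lambda>i. rh m UU WW i x) t j" "hN (Suc t) nN = rh m UU WW ja x"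
    using Suc by auto
  have "hN (Suc (Suc t)) (2^Suc t*j) = mxt (\<lambda>i. rh m UU WW i x) (Suc t) j" if j: "j < 2^(\<alpha>-Suc t)" for j
  proof -
    have j2: "2*j+1 < 2^(\<alpha>-t)" "2*j < 2^(\<alpha>-t)"
    proof -
      have "2^(\<alpha>-t) = 2 * (2::nat)^(\<alpha>-Suc t)" using Suc.prems
        by (metis Suc_diff_Suc Suc_le_lessD power_Suc)
      thus "2*j+1 < 2^(\<alpha>-t)" "2*j < 2^(\<alpha>-t)" using j by linarith+
    qed
    have eq0: "hN (Suc (Suc t)) (2^Suc t*j) = hN (Suc t) (2^Suc t*j) + relu (hN (Suc t) (2^Suc t*j + 2^(Suc t-1)) - hN (Suc t) (2^Suc t*j))"
      by (rule ht_step) (use Suc.prems j in auto)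
    have i2: "(2::nat)^Suc t*j + 2^(Suc t - 1) = 2^t*(2*j+1)" by simp
    have i1: "(2::nat)^Suc t*j = 2^t*(2*j)" by simp
    have eq: "hN (Suc (Suc t)) (2^Suc t*j) = hN (Suc t) (2^t*(2*j)) + relu (hN (Suc t) (2^t*(2*j+1)) - hN (Suc t) (2^t*(2*j)))"
      using eq0 unfolding i2 unfolding i1 .
    have a: "hN (Suc t) (2^t*(2*j)) = mxt (\<lambda>i. rh m UU WW i x) t (2*j)" using IH(1) j2 by blast
    have b: "hN (Suc t) (2^t*(2*j+1)) = mxt (\<lambda>i. rh m UU WW i x) t (2*j+1)" using IH(1) j2 by blast
    show ?thesis unfolding eq a b by (simp add: relu_max)
  qed
  moreover have "hN (Suc (Suc t)) nN = hN (Suc t) nN" by (rule hn_step) (use Suc.prems in auto)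
  ultimately show ?case using IH(2) by (simp del: res_hidden.simps)
qed

lemma pn_inv:
  "t \<le> \<alpha> \<Longrightarrow> (\<forall>j<2^(\<alpha>-t). pnN (Suc t) (2^t*j) j' \<le> 4^t * (\<Sum>i\<in>{2^t*j..<2^t*j+2^t}. pii m UU WW i j'))
      \<and> pnN (Suc t) nN j' = pii m UU WW ja j'"
proof (induction t)
  case 0
  then show ?case using pn1_leaf pn1_n by simp
next
  case (Suc t)
  let ?S = "\<lambda>j. (\<Sum>i\<in>{2^t*j..<2^t*j+2^t}. pii m UU WW i j')"
  have IH: "\<forall>j<2^(\<alpha>-t). pnN (Suc t) (2^t*j) j' \<le> 4^t * ?S j" "pnN (Suc t) nN j' = pii m UU WW ja j'"
    using Suc by auto
  have "pnN (Suc (Suc t)) (2^Suc t*j) j' \<le> 4^Suc t * (\<Sum>i\<in>{2^Suc t*j..<2^Suc t*j+2^Suc t}. pii m UU WW i j')"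
    if j: "j < 2^(\<alpha>-Suc t)" for j
  proof -
    have j2: "2*j+1 < 2^(\<alpha>-t)" "2*j < 2^(\<alpha>-t)"
    proof -
      have "2^(\<alpha>-t) = 2 * (2::nat)^(\<alpha>-Suc t)" using Suc.prems
        by (metis Suc_diff_Suc Suc_le_lessD power_Suc)
      thus "2*j+1 < 2^(\<alpha>-t)" "2*j < 2^(\<alpha>-t)" using j by linarith+
    qed
    have eq0: "pnN (Suc (Suc t)) (2^Suc t*j) j' = pnN (Suc t) (2^Suc t*j) j' + 3 * (pnN (Suc t) (2^Suc t*j + 2^(Suc t-1)) j' + pnN (Suc t) (2^Suc t*j) j')"
      by (rule pn_step) (use Suc.prems j in auto)
    have i2: "(2::nat)^Suc t*j + 2^(Suc t - 1) = 2^t*(2*j+1)" by simp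
    have i1: "(2::nat)^Suc t*j = 2^t*(2*j)" by simp
    have eq: "pnN (Suc (Suc t)) (2^Suc t*j) j' = 4 * pnN (Suc t) (2^t*(2*j)) j' + 3 * pnN (Suc t) (2^t*(2*j+1)) j'"
      using eq0 unfolding i2 unfolding i1 by (simp del: pn_mat.simps)
    have S0: "0 \<le> ?S (2*j+1)" by (intro sum_nonneg pii_nonneg)
    have "pnN (Suc (Suc t)) (2^Suc t*j) j' \<le> 4 * (4^t * ?S (2*j)) + 3 * (4^t * ?S (2*j+1))"
      unfolding eq using IH(1) j2 by (intro add_mono mult_left_mono) auto
    also have "\<dots> \<le> 4 * (4^t * ?S (2*j)) + 4 * (4^t * ?S (2*j+1))"
      using S0 by simp
    also have "\<dots> = 4^Suc t * (?S (2*j) + ?S (2*j+1))" by (simp add: algebra_simps)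
    also have "?S (2*j) + ?S (2*j+1) = (\<Sum>i\<in>{2^Suc t*j..<2^Suc t*j+2^Suc t}. pii m UU WW i j')"
    proof -
      have iv: "{(2::nat)^Suc t*j..<2^Suc t*j+2^Suc t} = {2^t*(2*j)..<2^t*(2*j+1)+2^t}" by (simp add: algebra_simps)
      have mid: "(2::nat)^t*(2*j) + 2^t = 2^t*(2*j+1)" by simp
      show ?thesis unfolding iv mid by (rule sum.atLeastLessThan_concat) simp_all
    qed
    finally show ?thesis .
  qed
  moreover have "pnN (Suc (Suc t)) nN j' = pnN (Suc t) nN j'" by (rule pn_n_step) (use Suc.prems in auto)
  ultimately show ?case using IH(2) by (simp del: pn_mat.simps)
qed

lemma D_facts: "0 < D" "nN < D" using DD by auto

lemma resnet_val: "resnet mw D (\<alpha>+1) thN x = c * Max ((\<lambda>i. rh m UU WW i x) ` {..<nN}) + rh m UU WW ja x"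
proof -
  have hv: "hN (Suc \<alpha>) 0 = mxt (\<lambda>i. rh m UU WW i x) \<alpha> 0" "hN (Suc \<alpha>) nN = rh m UU WW ja x"
    using h_inv[of \<alpha>] by auto
  have mx: "mxt (\<lambda>i. rh m UU WW i x) \<alpha> 0 = Max ((\<lambda>i. rh m UU WW i x) ` {..<nN})"
    by (simp add: mxt_Max lessThan_atLeast0)
  have "resnet mw D (\<alpha>+1) thN x = (\<Sum>i<D. ((if i = 0 then c else 0) + (if i = nN then 1 else 0)) * hN (Suc \<alpha>) i)"
    unfolding resnet_def by (simp add: uu del: res_hidden.simps)
  also have "\<dots> = c * hN (Suc \<alpha>) 0 + hN (Suc \<alpha>) nN"
    using D_facts by (subst sum_two_delta) auto
  finally show ?thesis using hv mx by simp
qed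

lemma path_norm_bound:
  assumes c: "0 \<le> c"
  shows "path_norm mw D (\<alpha>+1) thN \<le> c * 4^\<alpha> * (\<Sum>i<nN. \<Sum>j'\<in>UNIV. pii m UU WW i j') + (\<Sum>j'\<in>UNIV. pii m UU WW ja j')"
proof -
  have "path_norm mw D (\<alpha>+1) thN = (\<Sum>j'\<in>UNIV. \<bar>\<Sum>i<D. \<bar>(if i = 0 then c else 0) + (if i = nN then 1 else 0)\<bar> * pnN (Suc \<alpha>) i j'\<bar>)"
    unfolding path_norm_def by (simp add: uu del: pn_mat.simps)
  also have "\<dots> = (\<Sum>j'\<in>UNIV. c * pnN (Suc \<alpha>) 0 j' + pnN (Suc \<alpha>) nN j')"
  proof (rule sum.cong[OF refl])
    fix j'
    have "(\<Sum>i<D. \<bar>(if i = 0 then c else 0) + (if i = nN then 1 else 0)\<bar> * pnN (Suc \<alpha>) i j')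
       = (\<Sum>i<D. ((if i = 0 then c else 0) + (if i = nN then 1 else 0)) * pnN (Suc \<alpha>) i j')"
      by (rule sum.cong) (use c in auto)
    also have "\<dots> = c * pnN (Suc \<alpha>) 0 j' + pnN (Suc \<alpha>) nN j'"
      using D_facts by (subst sum_two_delta) auto
    finally have "(\<Sum>i<D. \<bar>(if i = 0 then c else 0) + (if i = nN then 1 else 0)\<bar> * pnN (Suc \<alpha>) i j') = c * pnN (Suc \<alpha>) 0 j' + pnN (Suc \<alpha>) nN j'" .
    then show "\<bar>\<Sum>i<D. \<bar>(if i = 0 then c else 0) + (if i = nN then 1 else 0)\<bar> * pnN (Suc \<alpha>) i j'\<bar> = c * pnN (Suc \<alpha>) 0 j' + pnN (Suc \<alpha>) nN j'"
    proof -
      have nn: "0 \<le> c * pnN (Suc \<alpha>) 0 j' + pnN (Suc \<alpha>) nN j'"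
        by (intro add_nonneg_nonneg mult_nonneg_nonneg c pn_mat_nonneg)
      show ?thesis using nn by (simp only: \<open>(\<Sum>i<D. \<bar>(if i = 0 then c else 0) + (if i = nN then 1 else 0)\<bar> * pnN (Suc \<alpha>) i j') = c * pnN (Suc \<alpha>) 0 j' + pnN (Suc \<alpha>) nN j'\<close> abs_of_nonneg)
    qed
  qed
  also have "\<dots> \<le> (\<Sum>j'\<in>UNIV. c * (4^\<alpha> * (\<Sum>i<nN. pii m UU WW i j')) + pii m UU WW ja j')"
  proof (rule sum_mono)
    fix j'
    have "pnN (Suc \<alpha>) 0 j' \<le> 4^\<alpha> * (\<Sum>i<nN. pii m UU WW i j')"
      using pn_inv[of \<alpha> j'] by (simp add: lessThan_atLeast0)
    moreover have "pnN (Suc \<alpha>) nN j' = pii m UU WW ja j'" using pn_inv[of \<alpha> j'] by simp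
    ultimately show "c * pnN (Suc \<alpha>) 0 j' + pnN (Suc \<alpha>) nN j' \<le> c * (4^\<alpha> * (\<Sum>i<nN. pii m UU WW i j')) + pii m UU WW ja j'"
      using c by (simp add: mult_left_mono)
  qed
  also have "\<dots> = c * 4^\<alpha> * (\<Sum>i<nN. \<Sum>j'\<in>UNIV. pii m UU WW i j') + (\<Sum>j'\<in>UNIV. pii m UU WW ja j')"
    by (simp add: sum.distrib sum_distrib_left sum.swap[of _ UNIV] mult_ac)
  finally show ?thesis .
qed

end



lemma relu_cont: "continuous_on A f \<Longrightarrow> continuous_on A (\<lambda>x. relu (f x))"
  unfolding relu_def by (intro continuous_intros)

lemma Zmeas[measurable]:
  "(\<lambda>p::(real^'d::finite) \<times> (real \<times> (real^'d)). fst (snd p) * relu (snd (snd p) \<bullet> fst p)) \<in> borel_measurable (borel \<Otimes>\<^sub>M borel)"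
  unfolding borel_prod
  by (intro borel_measurable_continuous_onI continuous_intros relu_cont)

lemma meas_test:
  fixes h' :: "real^'d::finite \<Rightarrow> real"
  assumes [measurable]: "h' \<in> borel_measurable borel"
  shows "(\<lambda>(x, z::real \<times> (real^'d)). ennreal ((h' x + fst z * relu (snd z \<bullet> x))\<^sup>2)) \<in> borel_measurable (borel \<Otimes>\<^sub>M borel)"
  by measurable

lemma ex_le_integral:
  assumes "prob_space M" "\<Phi> \<in> borel_measurable M" "(\<integral>\<^sup>+z. \<Phi> z \<partial>M) \<le> c" "c < \<infinity>"
  shows "\<exists>z\<in>space M. \<Phi> z \<le> c"
proof (rule ccontr)
  assume "\<not> ?thesis"
  hence lt: "\<forall>z\<in>space M. c < \<Phi> z" by (auto simp: not_le)
  interpret prob_space M by fact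
  have "(\<integral>\<^sup>+z. c \<partial>M) < (\<integral>\<^sup>+z. \<Phi> z \<partial>M)"
  proof (rule nn_integral_less)
    show "(\<integral>\<^sup>+z. c \<partial>M) \<noteq> \<infinity>" using assms(4) by (simp add: emeasure_space_1)
    show "AE x in M. c \<le> \<Phi> x" using lt by (auto intro!: AE_I2 less_imp_le)
    show "\<not> (AE x in M. \<Phi> x \<le> c)"
    proof
      assume "AE x in M. \<Phi> x \<le> c"
      from this AE_space have "AE x in M. False" by eventually_elim (use lt in force)
      thus False by simp
    qed
  qed (use assms in auto)
  thus False using assms(3) by (simp add: emeasure_space_1)
qed

lemma abs_inner_le: "\<bar>w \<bullet> v\<bar> \<le> l1norm w * infnorm (v::real^'d::finite)"
proof -
  have "\<bar>w \<bullet> v\<bar> = \<bar>\<Sum>i\<in>UNIV. w$i * v$i\<bar>" by (simp add: inner_vec_def)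
  also have "\<dots> \<le> (\<Sum>i\<in>UNIV. \<bar>w$i\<bar> * infnorm v)"
    by (rule order_trans[OF sum_abs sum_mono]) (auto simp: abs_mult intro: mult_left_mono component_le_infnorm_cart)
  also have "\<dots> = l1norm w * infnorm v" by (simp add: l1norm_def sum_distrib_right)
  finally show ?thesis .
qed

lemma abs_relu_le: "\<bar>relu y\<bar> \<le> \<bar>y\<bar>" by (simp add: relu_def)

lemma relu_lip: "\<bar>relu y - relu y'\<bar> \<le> \<bar>y - y'\<bar>" by (simp add: relu_def max_def)

context
  fixes S :: "(real^'d::finite) set" and h :: "real^'d \<Rightarrow> real" and \<rho> :: "(real \<times> (real^'d)) measure" and K :: real
  assumes S_compact: "compact S"
    and S_cube: "\<forall>x\<in>S. \<forall>i. 0 \<le> x $ i \<and> x $ i \<le> 1"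
    and S_pos: "emeasure lborel S > 0"
    and h_cont: "continuous_on S h"
    and repr: "barron_repr S h \<rho>"
    and mom: "barron_moment \<rho> \<le> ennreal K"
    and K_pos: "0 < K"
begin

abbreviation "muA \<equiv> uniform_measure lborel S"
definition "h' x = (if x \<in> S then h x else 0)"
definition ZZ :: "real \<times> (real^'d) \<Rightarrow> real^'d \<Rightarrow> real" where "ZZ z x = fst z * relu (snd z \<bullet> x)"

lemma S_sets: "S \<in> sets lborel"
  using S_compact by (simp add: compact_imp_closed borel_closed)

lemma prob_mu: "prob_space muA"
proof (rule prob_space_uniform_measure)
  show "emeasure lborel S \<noteq> 0" using S_pos by simp
  show "emeasure lborel S \<noteq> \<infinity>" using emeasure_bounded_finite[OF compact_imp_bounded[OF S_compact]] by simp
qed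

lemma sets_mu: "sets muA = sets borel" by simp

lemma AE_S: "AE x in muA. x \<in> S"
  by (rule AE_uniform_measureI[OF S_sets]) simp

lemma h'_meas[measurable]: "h' \<in> borel_measurable borel"
  unfolding h'_def
  by (rule borel_measurable_continuous_on_if) (use S_sets h_cont in \<open>auto intro: continuous_on_const\<close>)

lemma prob_rho: "prob_space \<rho>" and sets_rho: "sets \<rho> = sets borel"
  using repr by (auto simp: barron_repr_def)

lemma space_rho: "space \<rho> = UNIV"
  using sets_eq_imp_space_eq[OF sets_rho] by simp

lemma infnorm_S: "x \<in> S \<Longrightarrow> infnorm x \<le> 1"
  using S_cube by (auto simp: infnorm_cart intro!: cSup_least)

lemma ZZ_bound: "x \<in> S \<Longrightarrow> \<bar>ZZ z x\<bar> \<le> \<bar>fst z\<bar> * l1norm (snd z)"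
proof -
  assume x: "x \<in> S"
  have "\<bar>relu (snd z \<bullet> x)\<bar> \<le> l1norm (snd z)"
  proof -
    have "\<bar>snd z \<bullet> x\<bar> \<le> l1norm (snd z) * infnorm x" by (rule abs_inner_le)
    also have "\<dots> \<le> l1norm (snd z)"
      using infnorm_S[OF x] by (intro mult_left_le) (auto simp: l1norm_def intro: sum_nonneg)
    finally show ?thesis using abs_relu_le order_trans by blast
  qed
  thus ?thesis unfolding ZZ_def by (simp add: abs_mult mult_left_mono)
qed

lemma ZZ_meas_z[measurable]: "(\<lambda>z. ZZ z x) \<in> borel_measurable borel"
  unfolding ZZ_def relu_def by (intro borel_measurable_continuous_onI continuous_intros)

lemma mom_eq: "barron_moment \<rho> = (\<integral>\<^sup>+z. ennreal ((fst z)\<^sup>2 * (l1norm (snd z))\<^sup>2) \<partial>\<rho>)"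
  unfolding barron_moment_def by (simp add: case_prod_beta')

lemma pointwise:
  assumes x: "x \<in> S"
  shows "(\<integral>\<^sup>+z. ennreal ((a + ZZ z x)\<^sup>2) \<partial>\<rho>) \<le> ennreal ((a + h x)\<^sup>2) + ennreal K"
proof -
  have mr: "\<And>N. measurable \<rho> N = measurable borel N" by (rule measurable_cong_sets[OF sets_rho refl])
  have mZ: "(\<lambda>z. ZZ z x) \<in> borel_measurable \<rho>" unfolding mr by measurable
  have intZ: "integrable \<rho> (\<lambda>z. ZZ z x)" and hx: "h x = (\<integral>z. ZZ z x \<partial>\<rho>)"
    using repr x by (auto simp: barron_repr_def ZZ_def case_prod_beta')
  have b2: "(\<integral>\<^sup>+z. ennreal ((ZZ z x)\<^sup>2) \<partial>\<rho>) \<le> ennreal K"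
  proof -
    have "(\<integral>\<^sup>+z. ennreal ((ZZ z x)\<^sup>2) \<partial>\<rho>) \<le> (\<integral>\<^sup>+z. ennreal ((fst z)\<^sup>2 * (l1norm (snd z))\<^sup>2) \<partial>\<rho>)"
    proof (rule nn_integral_mono)
      fix z
      have "(ZZ z x)\<^sup>2 \<le> (\<bar>fst z\<bar> * l1norm (snd z))\<^sup>2"
        using ZZ_bound[OF x, of z] by (metis abs_ge_zero power2_abs power_mono)
      thus "ennreal ((ZZ z x)\<^sup>2) \<le> ennreal ((fst z)\<^sup>2 * (l1norm (snd z))\<^sup>2)"
        by (simp add: power_mult_distrib)
    qed
    thus ?thesis using mom mom_eq by simp
  qed
  have intZ2: "integrable \<rho> (\<lambda>z. (ZZ z x)\<^sup>2)"
  proof (rule integrableI_bounded)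
    show "(\<lambda>z. (ZZ z x)\<^sup>2) \<in> borel_measurable \<rho>" using mZ by measurable
    show "(\<integral>\<^sup>+z. ennreal (norm ((ZZ z x)\<^sup>2)) \<partial>\<rho>) < \<infinity>"
      using b2 by (simp add: le_less_trans)
  qed
  interpret prob_space \<rho> by (rule prob_rho)
  have I2: "(\<integral>z. (ZZ z x)\<^sup>2 \<partial>\<rho>) \<le> K"
  proof -
    have "ennreal (\<integral>z. (ZZ z x)\<^sup>2 \<partial>\<rho>) = (\<integral>\<^sup>+z. ennreal ((ZZ z x)\<^sup>2) \<partial>\<rho>)"
      by (rule nn_integral_eq_integral[symmetric]) (use intZ2 in auto)
    thus ?thesis using b2 K_pos by (simp add: ennreal_le_iff[symmetric])
  qed
  have eqf: "(\<lambda>z. (a + ZZ z x)\<^sup>2) = (\<lambda>z. a\<^sup>2 + 2 * a * ZZ z x + (ZZ z x)\<^sup>2)"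
    by (simp add: power2_sum algebra_simps)
  have intA: "integrable \<rho> (\<lambda>z. (a + ZZ z x)\<^sup>2)"
    unfolding eqf using intZ intZ2 by auto
  have "(\<integral>z. (a + ZZ z x)\<^sup>2 \<partial>\<rho>) = a\<^sup>2 + 2 * a * h x + (\<integral>z. (ZZ z x)\<^sup>2 \<partial>\<rho>)"
    unfolding eqf hx using intZ intZ2 by (simp add: prob_space)
  also have "\<dots> \<le> (a + h x)\<^sup>2 + K" unfolding power2_sum using I2 zero_le_power2[of "h x"] by linarith
  finally have le: "(\<integral>z. (a + ZZ z x)\<^sup>2 \<partial>\<rho>) \<le> (a + h x)\<^sup>2 + K" .
  have "(\<integral>\<^sup>+z. ennreal ((a + ZZ z x)\<^sup>2) \<partial>\<rho>) = ennreal (\<integral>z. (a + ZZ z x)\<^sup>2 \<partial>\<rho>)"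
    by (rule nn_integral_eq_integral) (use intA in auto)
  also have "\<dots> \<le> ennreal ((a + h x)\<^sup>2 + K)" using le by (rule ennreal_leI)
  also have "\<dots> = ennreal ((a + h x)\<^sup>2) + ennreal K" using K_pos by (simp add: ennreal_plus)
  finally show ?thesis .
qed

lemma h_sq_le:
  assumes x: "x \<in> S"
  shows "(h x)\<^sup>2 \<le> K"
proof -
  have mr: "\<And>N. measurable \<rho> N = measurable borel N" by (rule measurable_cong_sets[OF sets_rho refl])
  have mZ: "(\<lambda>z. ZZ z x) \<in> borel_measurable \<rho>" unfolding mr by measurable
  have intZ: "integrable \<rho> (\<lambda>z. ZZ z x)" and hx: "h x = (\<integral>z. ZZ z x \<partial>\<rho>)"
    using repr x by (auto simp: barron_repr_def ZZ_def case_prod_beta')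
  have b2: "(\<integral>\<^sup>+z. ennreal ((ZZ z x)\<^sup>2) \<partial>\<rho>) \<le> ennreal K"
  proof -
    have "(\<integral>\<^sup>+z. ennreal ((ZZ z x)\<^sup>2) \<partial>\<rho>) \<le> (\<integral>\<^sup>+z. ennreal ((fst z)\<^sup>2 * (l1norm (snd z))\<^sup>2) \<partial>\<rho>)"
    proof (rule nn_integral_mono)
      fix z
      have "(ZZ z x)\<^sup>2 \<le> (\<bar>fst z\<bar> * l1norm (snd z))\<^sup>2"
        using ZZ_bound[OF x, of z] by (metis abs_ge_zero power2_abs power_mono)
      thus "ennreal ((ZZ z x)\<^sup>2) \<le> ennreal ((fst z)\<^sup>2 * (l1norm (snd z))\<^sup>2)"
        by (simp add: power_mult_distrib)
    qed
    thus ?thesis using mom mom_eq by simp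
  qed
  have intZ2: "integrable \<rho> (\<lambda>z. (ZZ z x)\<^sup>2)"
  proof (rule integrableI_bounded)
    show "(\<lambda>z. (ZZ z x)\<^sup>2) \<in> borel_measurable \<rho>" using mZ by measurable
    show "(\<integral>\<^sup>+z. ennreal (norm ((ZZ z x)\<^sup>2)) \<partial>\<rho>) < \<infinity>"
      using b2 by (simp add: le_less_trans)
  qed
  interpret prob_space \<rho> by (rule prob_rho)
  have I2: "(\<integral>z. (ZZ z x)\<^sup>2 \<partial>\<rho>) \<le> K"
  proof -
    have "ennreal (\<integral>z. (ZZ z x)\<^sup>2 \<partial>\<rho>) = (\<integral>\<^sup>+z. ennreal ((ZZ z x)\<^sup>2) \<partial>\<rho>)"
      by (rule nn_integral_eq_integral[symmetric]) (use intZ2 in auto)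
    thus ?thesis using b2 K_pos by (simp add: ennreal_le_iff[symmetric])
  qed
  define a where "a = - h x"
  have eqf: "(\<lambda>z. (a + ZZ z x)\<^sup>2) = (\<lambda>z. a\<^sup>2 + 2 * a * ZZ z x + (ZZ z x)\<^sup>2)"
    by (simp add: power2_sum algebra_simps)
  have "(\<integral>z. (a + ZZ z x)\<^sup>2 \<partial>\<rho>) = a\<^sup>2 + 2 * a * h x + (\<integral>z. (ZZ z x)\<^sup>2 \<partial>\<rho>)"
    unfolding eqf hx using intZ intZ2 by (simp add: prob_space)
  moreover have "0 \<le> (\<integral>z. (a + ZZ z x)\<^sup>2 \<partial>\<rho>)" by simp
  ultimately have "0 \<le> a\<^sup>2 + 2 * a * h x + (\<integral>z. (ZZ z x)\<^sup>2 \<partial>\<rho>)" by simp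
  hence "(h x)\<^sup>2 \<le> (\<integral>z. (ZZ z x)\<^sup>2 \<partial>\<rho>)" unfolding a_def by (simp add: power2_eq_square)
  thus ?thesis using I2 by simp
qed

lemma ZZ_joint[measurable]: "(\<lambda>p. ZZ (snd p) (fst p)) \<in> borel_measurable (borel \<Otimes>\<^sub>M borel)"
  unfolding ZZ_def by (rule Zmeas)

lemma ZZ_joint'[measurable]: "(\<lambda>p. ZZ (fst p) (snd p)) \<in> borel_measurable (borel \<Otimes>\<^sub>M borel)"
  unfolding ZZ_def relu_def borel_prod by (intro borel_measurable_continuous_onI continuous_intros)

lemma l1_cont: "continuous_on A (\<lambda>z. f z) \<Longrightarrow> continuous_on A (\<lambda>z. l1norm (f z :: real^'d::finite))"
  unfolding l1norm_def by (intro continuous_intros)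

lemma expect:
  assumes e_meas[measurable]: "e \<in> borel_measurable borel"
  shows "(\<lambda>z. ((\<integral>\<^sup>+x. ennreal ((e x + ZZ z x - h' x)\<^sup>2) \<partial>muA) + ennreal (sqrt K * (\<bar>fst z\<bar> * l1norm (snd z))))) \<in> borel_measurable \<rho>"
   and "(\<integral>\<^sup>+z. ((\<integral>\<^sup>+x. ennreal ((e x + ZZ z x - h' x)\<^sup>2) \<partial>muA) + ennreal (sqrt K * (\<bar>fst z\<bar> * l1norm (snd z)))) \<partial>\<rho>)
     \<le> (\<integral>\<^sup>+x. ennreal ((e x)\<^sup>2) \<partial>muA) + ennreal (2*K)"
proof -
  have mr: "\<And>N. measurable \<rho> N = measurable borel N" by (rule measurable_cong_sets[OF sets_rho refl])
  have mm: "\<And>N. measurable muA N = measurable borel N" by (rule measurable_cong_sets[OF sets_mu refl])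
  have mmr: "\<And>N. measurable (muA \<Otimes>\<^sub>M \<rho>) N = measurable (borel \<Otimes>\<^sub>M borel) N"
    by (rule measurable_cong_sets[OF sets_pair_measure_cong[OF sets_mu sets_rho] refl])
  have mrm: "\<And>N. measurable (\<rho> \<Otimes>\<^sub>M muA) N = measurable (borel \<Otimes>\<^sub>M borel) N"
    by (rule measurable_cong_sets[OF sets_pair_measure_cong[OF sets_rho sets_mu] refl])
  interpret pair_sigma_finite muA \<rho>
    by (simp add: pair_sigma_finite_def prob_space_imp_sigma_finite prob_mu prob_rho)
  interpret rho: prob_space \<rho> by (rule prob_rho)
  interpret mu: prob_space muA by (rule prob_mu)
  have sp_mu: "emeasure muA UNIV = 1" using mu.emeasure_space_1 by simp
  have sp_rho: "emeasure \<rho> UNIV = 1" using rho.emeasure_space_1 space_rho by simp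
  let ?F = "\<lambda>x z. ennreal ((e x + ZZ z x - h' x)\<^sup>2)"
  have jF: "(\<lambda>(x, z). ?F x z) \<in> borel_measurable (muA \<Otimes>\<^sub>M \<rho>)"
    unfolding mmr by measurable
  have jF': "(\<lambda>(z, x). ?F x z) \<in> borel_measurable (\<rho> \<Otimes>\<^sub>M muA)"
    unfolding mrm by measurable
  have mA: "(\<lambda>z. \<integral>\<^sup>+x. ?F x z \<partial>muA) \<in> borel_measurable \<rho>"
    by (rule sigma_finite_measure.borel_measurable_nn_integral[OF prob_space_imp_sigma_finite[OF prob_mu] jF'])
  have mB0: "(\<lambda>z::real \<times> (real^'d). sqrt K * (\<bar>fst z\<bar> * l1norm (snd z))) \<in> borel_measurable borel"
  proof -
    have l1c: "continuous_on UNIV (\<lambda>z::real \<times> (real^'d). l1norm (snd z))" by (rule l1_cont) (intro continuous_intros)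
    show ?thesis by (intro borel_measurable_continuous_onI continuous_intros l1c)
  qed
  have mB: "(\<lambda>z. ennreal (sqrt K * (\<bar>fst z\<bar> * l1norm (snd z)))) \<in> borel_measurable \<rho>"
    unfolding mr using mB0 by measurable
  have split: "(\<integral>\<^sup>+z. ((\<integral>\<^sup>+x. ?F x z \<partial>muA) + ennreal (sqrt K * (\<bar>fst z\<bar> * l1norm (snd z)))) \<partial>\<rho>)
     = (\<integral>\<^sup>+z. (\<integral>\<^sup>+x. ?F x z \<partial>muA) \<partial>\<rho>) + (\<integral>\<^sup>+z. ennreal (sqrt K * (\<bar>fst z\<bar> * l1norm (snd z))) \<partial>\<rho>)"
    by (rule nn_integral_add[OF mA mB])
  have fub: "(\<integral>\<^sup>+z. (\<integral>\<^sup>+x. ?F x z \<partial>muA) \<partial>\<rho>) = (\<integral>\<^sup>+x. (\<integral>\<^sup>+z. ?F x z \<partial>\<rho>) \<partial>muA)"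
    by (rule Fubini'[OF jF])
  have A1: "(\<integral>\<^sup>+x. (\<integral>\<^sup>+z. ?F x z \<partial>\<rho>) \<partial>muA) \<le> (\<integral>\<^sup>+x. (ennreal ((e x)\<^sup>2) + ennreal K) \<partial>muA)"
  proof (rule nn_integral_mono_AE)
    show "AE x in muA. (\<integral>\<^sup>+z. ?F x z \<partial>\<rho>) \<le> ennreal ((e x)\<^sup>2) + ennreal K"
      using AE_S
    proof eventually_elim
      case (elim x)
      have eqz: "\<And>z. e x + ZZ z x - h' x = (e x - h x) + ZZ z x" using elim by (simp add: h'_def)
      have "(\<integral>\<^sup>+z. ?F x z \<partial>\<rho>) = (\<integral>\<^sup>+z. ennreal (((e x - h x) + ZZ z x)\<^sup>2) \<partial>\<rho>)"
        by (simp only: eqz)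
      also have "\<dots> \<le> ennreal (((e x - h x) + h x)\<^sup>2) + ennreal K" by (rule pointwise[OF elim])
      also have "(e x - h x) + h x = e x" by simp
      finally show ?case .
    qed
  qed
  have A2: "(\<integral>\<^sup>+x. (ennreal ((e x)\<^sup>2) + ennreal K) \<partial>muA) = (\<integral>\<^sup>+x. ennreal ((e x)\<^sup>2) \<partial>muA) + ennreal K"
  proof -
    have m1: "(\<lambda>x. ennreal ((e x)\<^sup>2)) \<in> borel_measurable muA" unfolding mm by measurable
    have "(\<integral>\<^sup>+x. (ennreal ((e x)\<^sup>2) + ennreal K) \<partial>muA) = (\<integral>\<^sup>+x. ennreal ((e x)\<^sup>2) \<partial>muA) + (\<integral>\<^sup>+x. ennreal K \<partial>muA)"
      by (rule nn_integral_add[OF m1]) simp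
    also have "(\<integral>\<^sup>+x. ennreal K \<partial>muA) = ennreal K" by (simp add: sp_mu)
    finally show ?thesis .
  qed
  have B_le: "(\<integral>\<^sup>+z. ennreal (sqrt K * (\<bar>fst z\<bar> * l1norm (snd z))) \<partial>\<rho>) \<le> ennreal K"
  proof -
    have "(\<integral>\<^sup>+z. ennreal (sqrt K * (\<bar>fst z\<bar> * l1norm (snd z))) \<partial>\<rho>)
       \<le> (\<integral>\<^sup>+z. (ennreal (1/2) * ennreal ((fst z)\<^sup>2 * (l1norm (snd z))\<^sup>2) + ennreal (K/2)) \<partial>\<rho>)"
    proof (rule nn_integral_mono)
      fix z
      let ?t = "\<bar>fst z\<bar> * l1norm (snd z)"
      have sq: "(sqrt K)\<^sup>2 = K" using K_pos by simp
      have "sqrt K * ?t \<le> (?t\<^sup>2 + K) / 2"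
      proof -
        have "0 \<le> (?t - sqrt K)\<^sup>2" by simp
        thus ?thesis unfolding power2_diff sq by (simp add: mult_ac)
      qed
      also have "?t\<^sup>2 = (fst z)\<^sup>2 * (l1norm (snd z))\<^sup>2" by (simp add: power_mult_distrib)
      finally have le: "sqrt K * ?t \<le> 1/2 * ((fst z)\<^sup>2 * (l1norm (snd z))\<^sup>2) + K/2" by simp
      have "ennreal (sqrt K * ?t) \<le> ennreal (1/2 * ((fst z)\<^sup>2 * (l1norm (snd z))\<^sup>2) + K/2)"
        by (rule ennreal_leI[OF le])
      also have "\<dots> = ennreal (1/2 * ((fst z)\<^sup>2 * (l1norm (snd z))\<^sup>2)) + ennreal (K/2)"
        by (rule ennreal_plus) (use K_pos in auto)
      also have "ennreal (1/2 * ((fst z)\<^sup>2 * (l1norm (snd z))\<^sup>2)) = ennreal (1/2) * ennreal ((fst z)\<^sup>2 * (l1norm (snd z))\<^sup>2)"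
        by (rule ennreal_mult) auto
      finally show "ennreal (sqrt K * ?t) \<le> ennreal (1/2) * ennreal ((fst z)\<^sup>2 * (l1norm (snd z))\<^sup>2) + ennreal (K/2)" .
    qed
    also have "\<dots> = ennreal (1/2) * barron_moment \<rho> + ennreal (K/2)"
    proof -
      have l1c: "continuous_on UNIV (\<lambda>z::real \<times> (real^'d). l1norm (snd z))" by (rule l1_cont) (intro continuous_intros)
      have m0: "(\<lambda>z::real \<times> (real^'d). (fst z)\<^sup>2 * (l1norm (snd z))\<^sup>2) \<in> borel_measurable borel"
        by (intro borel_measurable_continuous_onI continuous_intros l1c)
      have m1: "(\<lambda>z. ennreal ((fst z)\<^sup>2 * (l1norm (snd z))\<^sup>2)) \<in> borel_measurable \<rho>"
        unfolding mr using m0 by measurable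
      have m2: "(\<lambda>z. ennreal (1/2) * ennreal ((fst z)\<^sup>2 * (l1norm (snd z))\<^sup>2)) \<in> borel_measurable \<rho>"
        using m1 by simp
      have "(\<integral>\<^sup>+z. (ennreal (1/2) * ennreal ((fst z)\<^sup>2 * (l1norm (snd z))\<^sup>2) + ennreal (K/2)) \<partial>\<rho>)
          = (\<integral>\<^sup>+z. ennreal (1/2) * ennreal ((fst z)\<^sup>2 * (l1norm (snd z))\<^sup>2) \<partial>\<rho>) + (\<integral>\<^sup>+z. ennreal (K/2) \<partial>\<rho>)"
        by (rule nn_integral_add[OF m2]) simp
      also have "(\<integral>\<^sup>+z. ennreal (1/2) * ennreal ((fst z)\<^sup>2 * (l1norm (snd z))\<^sup>2) \<partial>\<rho>) = ennreal (1/2) * barron_moment \<rho>"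
        unfolding mom_eq by (rule nn_integral_cmult[OF m1])
      also have "(\<integral>\<^sup>+z. ennreal (K/2) \<partial>\<rho>) = ennreal (K/2)" by (simp add: rho.emeasure_space_1)
      finally show ?thesis .
    qed
    also have "\<dots> \<le> ennreal (1/2) * ennreal K + ennreal (K/2)"
      using mom by (intro add_mono mult_left_mono) auto
    also have "\<dots> = ennreal K"
    proof -
      have "ennreal (1/2) * ennreal K = ennreal (1/2 * K)" by (rule ennreal_mult[symmetric]) (use K_pos in auto)
      moreover have "ennreal (1/2 * K) + ennreal (K/2) = ennreal (1/2 * K + K/2)" by (rule ennreal_plus[symmetric]) (use K_pos in auto)
      moreover have "1/2 * K + K/2 = K" by simp
      ultimately show ?thesis by metis
    qed
    finally show ?thesis .
  qed
  have KK: "ennreal K + ennreal K = ennreal (2*K)"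
  proof -
    have "ennreal K + ennreal K = ennreal (K + K)" by (rule ennreal_plus[symmetric]) (use K_pos in auto)
    also have "K + K = 2 * K" by simp
    finally show ?thesis .
  qed
  have X: "(\<integral>\<^sup>+x. (\<integral>\<^sup>+z. ?F x z \<partial>\<rho>) \<partial>muA) \<le> (\<integral>\<^sup>+x. ennreal ((e x)\<^sup>2) \<partial>muA) + ennreal K"
    using A1 unfolding A2 .
  have "(\<integral>\<^sup>+z. ((\<integral>\<^sup>+x. ?F x z \<partial>muA) + ennreal (sqrt K * (\<bar>fst z\<bar> * l1norm (snd z)))) \<partial>\<rho>)
     \<le> ((\<integral>\<^sup>+x. ennreal ((e x)\<^sup>2) \<partial>muA) + ennreal K) + ennreal K"
    unfolding split fub by (rule add_mono[OF X B_le])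
  also have "\<dots> = (\<integral>\<^sup>+x. ennreal ((e x)\<^sup>2) \<partial>muA) + ennreal (2*K)"
    by (simp only: add.assoc KK)
  finally show "(\<integral>\<^sup>+z. ((\<integral>\<^sup>+x. ennreal ((e x + ZZ z x - h' x)\<^sup>2) \<partial>muA) + ennreal (sqrt K * (\<bar>fst z\<bar> * l1norm (snd z)))) \<partial>\<rho>)
     \<le> (\<integral>\<^sup>+x. ennreal ((e x)\<^sup>2) \<partial>muA) + ennreal (2*K)" .
  show "(\<lambda>z. ((\<integral>\<^sup>+x. ennreal ((e x + ZZ z x - h' x)\<^sup>2) \<partial>muA) + ennreal (sqrt K * (\<bar>fst z\<bar> * l1norm (snd z))))) \<in> borel_measurable \<rho>"
    using mA mB by (rule borel_measurable_add)
qed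

lemma ZZ_meas_x[measurable]: "(\<lambda>x. ZZ z x) \<in> borel_measurable borel"
  unfolding ZZ_def relu_def by (intro borel_measurable_continuous_onI continuous_intros)

lemma iter:
  "\<exists>us ws. (\<integral>\<^sup>+x. ennreal ((\<Sum>k<N. (ZZ (us k, ws k) x - h' x))\<^sup>2) \<partial>muA)
      + ennreal (sqrt K * (\<Sum>k<N. \<bar>us k\<bar> * l1norm (ws k))) \<le> ennreal (2*K*real N)"
proof (induction N)
  case 0
  then show ?case by simp
next
  case (Suc N)
  then obtain us ws where IH: "(\<integral>\<^sup>+x. ennreal ((\<Sum>k<N. (ZZ (us k, ws k) x - h' x))\<^sup>2) \<partial>muA)
      + ennreal (sqrt K * (\<Sum>k<N. \<bar>us k\<bar> * l1norm (ws k))) \<le> ennreal (2*K*real N)" by blast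
  define e where "e x = (\<Sum>k<N. (ZZ (us k, ws k) x - h' x))" for x
  define A where "A = (\<integral>\<^sup>+x. ennreal ((e x)\<^sup>2) \<partial>muA)"
  define so where "so = (\<Sum>k<N. \<bar>us k\<bar> * l1norm (ws k))"
  have so_nn: "0 \<le> so" unfolding so_def by (intro sum_nonneg mult_nonneg_nonneg) (auto simp: l1norm_def intro: sum_nonneg)
  have em[measurable]: "e \<in> borel_measurable borel" unfolding e_def by measurable
  have IH': "A + ennreal (sqrt K * so) \<le> ennreal (2*K*real N)" using IH by (simp add: A_def e_def so_def)
  have Afin: "A + ennreal (2*K) < \<infinity>"
  proof -
    have "A \<le> A + ennreal (sqrt K * so)" by (rule add_increasing2) simp_all
    hence "A \<le> ennreal (2*K*real N)" using IH' by (rule order_trans)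
    hence "A < top" using ennreal_less_top[of "2*K*real N"] by (rule le_less_trans)
    hence "A \<noteq> \<infinity>" by simp
    thus ?thesis by (simp add: less_top[symmetric] ennreal_add_eq_top)
  qed
  let ?\<Phi> = "\<lambda>z. ((\<integral>\<^sup>+x. ennreal ((e x + ZZ z x - h' x)\<^sup>2) \<partial>muA) + ennreal (sqrt K * (\<bar>fst z\<bar> * l1norm (snd z))))"
  obtain z where z: "?\<Phi> z \<le> A + ennreal (2*K)"
    using ex_le_integral[OF prob_rho expect(1)[OF em] expect(2)[OF em, folded A_def] Afin] by blast
  define us' where "us' = us(N := fst z)"
  define ws' where "ws' = ws(N := snd z)"
  have s1: "(\<Sum>k<Suc N. (ZZ (us' k, ws' k) x - h' x)) = e x + ZZ z x - h' x" for x
    by (simp add: us'_def ws'_def e_def)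
  have s2: "(\<Sum>k<Suc N. \<bar>us' k\<bar> * l1norm (ws' k)) = so + \<bar>fst z\<bar> * l1norm (snd z)"
    by (simp add: us'_def ws'_def so_def)
  have nu_nn: "0 \<le> sqrt K * (\<bar>fst z\<bar> * l1norm (snd z))"
    using K_pos by (intro mult_nonneg_nonneg) (auto simp: l1norm_def intro: sum_nonneg)
  have "(\<integral>\<^sup>+x. ennreal ((\<Sum>k<Suc N. (ZZ (us' k, ws' k) x - h' x))\<^sup>2) \<partial>muA)
      + ennreal (sqrt K * (\<Sum>k<Suc N. \<bar>us' k\<bar> * l1norm (ws' k)))
      = ?\<Phi> z + ennreal (sqrt K * so)"
  proof -
    have "ennreal (sqrt K * (so + \<bar>fst z\<bar> * l1norm (snd z))) = ennreal (sqrt K * so) + ennreal (sqrt K * (\<bar>fst z\<bar> * l1norm (snd z)))"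
      using so_nn nu_nn K_pos by (simp add: distrib_left ennreal_plus)
    thus ?thesis unfolding s1 s2 by (simp only: add_ac)
  qed
  also have "\<dots> \<le> (A + ennreal (2*K)) + ennreal (sqrt K * so)" using z by (rule add_right_mono)
  also have "\<dots> = (A + ennreal (sqrt K * so)) + ennreal (2*K)" by (simp only: add_ac)
  also have "\<dots> \<le> ennreal (2*K*real N) + ennreal (2*K)" using IH' by (rule add_right_mono)
  also have "\<dots> = ennreal (2*K*real N + 2*K)" by (rule ennreal_plus[symmetric]) (use K_pos in auto)
  also have "2*K*real N + 2*K = 2*K*real (Suc N)" by (simp add: algebra_simps)
  finally show ?case by blast
qed


lemma approx:
  assumes m: "0 < m"
  shows "\<exists>us ws. (\<integral>\<^sup>+x. ennreal ((h x - (\<Sum>k<m. us k * relu (ws k \<bullet> x)) / real m)\<^sup>2) \<partial>muA) \<le> ennreal (2*K/real m)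
     \<and> (\<Sum>k<m. \<bar>us k\<bar> * l1norm (ws k)) / real m \<le> 2 * sqrt K"
proof -
  obtain us ws where I: "(\<integral>\<^sup>+x. ennreal ((\<Sum>k<m. (ZZ (us k, ws k) x - h' x))\<^sup>2) \<partial>muA)
      + ennreal (sqrt K * (\<Sum>k<m. \<bar>us k\<bar> * l1norm (ws k))) \<le> ennreal (2*K*real m)"
    using iter[of m] by blast
  define e where "e x = (\<Sum>k<m. (ZZ (us k, ws k) x - h' x))" for x
  have em[measurable]: "e \<in> borel_measurable borel" unfolding e_def by measurable
  define A where "A = (\<integral>\<^sup>+x. ennreal ((e x)\<^sup>2) \<partial>muA)"
  define so where "so = (\<Sum>k<m. \<bar>us k\<bar> * l1norm (ws k))"
  have I': "A + ennreal (sqrt K * so) \<le> ennreal (2*K*real m)" using I by (simp only: A_def e_def so_def)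
  have "A \<le> A + ennreal (sqrt K * so)" by (rule add_increasing2) simp_all
  hence A_le: "A \<le> ennreal (2*K*real m)" using I' by (rule order_trans)
  have "ennreal (sqrt K * so) \<le> A + ennreal (sqrt K * so)" by (rule add_increasing) simp_all
  hence "ennreal (sqrt K * so) \<le> ennreal (2*K*real m)" using I' by (rule order_trans)
  hence "sqrt K * so \<le> 2*K*real m" using K_pos by (simp add: ennreal_le_iff)
  also have "2*K*real m = sqrt K * (2 * sqrt K * real m)"
  proof -
    have sK: "sqrt K * sqrt K = K" using K_pos by simp
    have "sqrt K * (2 * sqrt K * real m) = 2 * (sqrt K * sqrt K) * real m" by (simp only: mult_ac)
    thus ?thesis unfolding sK by (simp only: eq_commute)
  qed
  finally have "so \<le> 2 * sqrt K * real m" using K_pos by simp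
  hence P: "so / real m \<le> 2 * sqrt K" using m by (simp add: divide_le_eq)
  have "(\<integral>\<^sup>+x. ennreal ((h x - (\<Sum>k<m. us k * relu (ws k \<bullet> x)) / real m)\<^sup>2) \<partial>muA)
       = (\<integral>\<^sup>+x. ennreal (1 / (real m)\<^sup>2) * ennreal ((e x)\<^sup>2) \<partial>muA)"
  proof (rule nn_integral_cong_AE)
    show "AE x in muA. ennreal ((h x - (\<Sum>k<m. us k * relu (ws k \<bullet> x)) / real m)\<^sup>2) = ennreal (1 / (real m)\<^sup>2) * ennreal ((e x)\<^sup>2)"
      using AE_S
    proof eventually_elim
      case (elim x)
      have ex: "e x = (\<Sum>k<m. us k * relu (ws k \<bullet> x)) - real m * h x"
        using elim by (simp add: e_def ZZ_def h'_def sum_subtractf)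
      have "(h x - (\<Sum>k<m. us k * relu (ws k \<bullet> x)) / real m)\<^sup>2 = 1 / (real m)\<^sup>2 * (e x)\<^sup>2"
        unfolding ex using m by (simp add: field_simps power2_eq_square)
      hence "ennreal ((h x - (\<Sum>k<m. us k * relu (ws k \<bullet> x)) / real m)\<^sup>2) = ennreal (1 / (real m)\<^sup>2 * (e x)\<^sup>2)" by (simp only:)
      also have "\<dots> = ennreal (1 / (real m)\<^sup>2) * ennreal ((e x)\<^sup>2)" by (rule ennreal_mult) auto
      finally show ?case .
    qed
  qed
  also have "\<dots> = ennreal (1 / (real m)\<^sup>2) * A"
    unfolding A_def by (rule nn_integral_cmult) (simp add: measurable_cong_sets[OF sets_mu refl])
  also have "\<dots> \<le> ennreal (1 / (real m)\<^sup>2) * ennreal (2*K*real m)"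
    using A_le by (rule mult_left_mono) simp
  also have "\<dots> = ennreal (1 / (real m)\<^sup>2 * (2*K*real m))"
    by (rule ennreal_mult[symmetric]) (use K_pos in auto)
  also have "1 / (real m)\<^sup>2 * (2*K*real m) = 2*K/real m"
    using m by (simp add: field_simps power2_eq_square)
  finally show ?thesis using P unfolding so_def by blast
qed

end



lemma Max_diff_le:
  fixes f g :: "'b \<Rightarrow> real"
  assumes "finite A" "A \<noteq> {}"
  shows "\<bar>Max (f ` A) - Max (g ` A)\<bar> \<le> (\<Sum>a\<in>A. \<bar>f a - g a\<bar>)"
proof -
  have one: "Max (f ` A) - Max (g ` A) \<le> (\<Sum>a\<in>A. \<bar>f a - g a\<bar>)" for f g :: "'b \<Rightarrow> real"
  proof -
    have "Max (f ` A) \<in> f ` A" using assms by (intro Max_in) auto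
    then obtain a0 where a0: "a0 \<in> A" "Max (f ` A) = f a0" by auto
    have "f a0 - g a0 \<le> \<bar>f a0 - g a0\<bar>" by simp
    also have "\<dots> \<le> (\<Sum>a\<in>A. \<bar>f a - g a\<bar>)"
      using assms a0 by (intro member_le_sum) auto
    moreover have "g a0 \<le> Max (g ` A)" using assms a0 by auto
    ultimately show ?thesis using a0 by linarith
  qed
  show ?thesis using one[of f g] one[of g f] by (simp add: abs_minus_commute abs_le_iff)
qed

lemma rh_lip:
  "\<bar>rh m UU WW j s - rh m UU WW j s'\<bar> \<le> (\<Sum>k<m. \<bar>UU j k\<bar> * l1norm (WW j k)) / real m * infnorm (s - s')"
proof -
  have "\<bar>rh m UU WW j s - rh m UU WW j s'\<bar> = \<bar>\<Sum>k<m. UU j k * (relu (WW j k \<bullet> s) - relu (WW j k \<bullet> s'))\<bar> / real m"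
    by (simp add: rh_def diff_divide_distrib[symmetric] sum_subtractf[symmetric] algebra_simps)
  also have "\<bar>\<Sum>k<m. UU j k * (relu (WW j k \<bullet> s) - relu (WW j k \<bullet> s'))\<bar> \<le> (\<Sum>k<m. \<bar>UU j k\<bar> * l1norm (WW j k) * infnorm (s - s'))"
  proof (rule order_trans[OF sum_abs sum_mono])
    fix k
    have "\<bar>relu (WW j k \<bullet> s) - relu (WW j k \<bullet> s')\<bar> \<le> \<bar>WW j k \<bullet> s - WW j k \<bullet> s'\<bar>" by (rule relu_lip)
    also have "WW j k \<bullet> s - WW j k \<bullet> s' = WW j k \<bullet> (s - s')" by (simp add: inner_diff_right)
    also have "\<bar>\<dots>\<bar> \<le> l1norm (WW j k) * infnorm (s - s')" by (rule abs_inner_le)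
    finally show "\<bar>UU j k * (relu (WW j k \<bullet> s) - relu (WW j k \<bullet> s'))\<bar> \<le> \<bar>UU j k\<bar> * l1norm (WW j k) * infnorm (s - s')"
      by (simp add: abs_mult mult.assoc mult_left_mono)
  qed
  hence "\<bar>\<Sum>k<m. UU j k * (relu (WW j k \<bullet> s) - relu (WW j k \<bullet> s'))\<bar> / real m \<le> (\<Sum>k<m. \<bar>UU j k\<bar> * l1norm (WW j k) * infnorm (s - s')) / real m"
    by (simp add: divide_right_mono)
  also have "\<dots> = (\<Sum>k<m. \<bar>UU j k\<bar> * l1norm (WW j k)) / real m * infnorm (s - s')"
    by (simp add: sum_distrib_right)
  finally show ?thesis .
qed

lemma sum_pii: "(\<Sum>j'\<in>UNIV. pii m UU WW i j') = 3 * ((\<Sum>k<m. \<bar>UU i k\<bar> * l1norm (WW i k)) / real m)"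
  unfolding pii_def l1norm_def
  by (simp add: sum_distrib_left sum_divide_distrib sum.swap[of _ UNIV] mult_ac)

lemma ineq1:
  fixes n m R w :: real
  assumes n: "1 \<le> n" and m: "0 < m" and w: "1 \<le> w"
  shows "4 * R^2 / (n * m) \<le> w * (256 * n^5 * R^2 / m)"
proof -
  have R2: "0 \<le> R^2" by simp
  have "4 * R^2 / (n * m) = (4 * R^2 / m) / n" by (simp add: field_simps)
  also have "\<dots> \<le> 4 * R^2 / m"
  proof -
    have "0 \<le> 4 * R^2 / m" using m by simp
    hence "(4 * R^2 / m) / n \<le> (4 * R^2 / m) / 1" using n by (intro divide_left_mono) auto
    thus ?thesis by simp
  qed
  also have "\<dots> \<le> 256 * n^5 * R^2 / m"
  proof -
    have "1 \<le> n^5" using n by (simp add: one_le_power)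
    hence "4 * R^2 \<le> 256 * n^5 * R^2" using R2 by (intro mult_right_mono) auto
    thus ?thesis using m by (simp add: divide_right_mono)
  qed
  also have "\<dots> \<le> w * (256 * n^5 * R^2 / m)"
  proof -
    have "0 \<le> 256 * n^5 * R^2 / m" using n m by simp
    hence "1 * (256 * n^5 * R^2 / m) \<le> w * (256 * n^5 * R^2 / m)" using w by (intro mult_right_mono)
    thus ?thesis by simp
  qed
  finally show ?thesis .
qed

lemma ineq2:
  fixes n z :: real
  assumes n: "1 \<le> n" and z: "0 \<le> z"
  shows "8 * n * z \<le> 576 * n^7 * z"
proof -
  have "n \<le> n^7" using n by (metis one_le_numeral power_increasing power_one_right)
  hence "8 * n \<le> 576 * n^7" using n by simp
  thus ?thesis using z by (intro mult_right_mono) auto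
qed


lemma sq_sum_le: "((x::real) + y)^2 \<le> 2 * x^2 + 2 * y^2"
proof -
  have "2 * x^2 + 2 * y^2 - (x + y)^2 = (x - y)^2" by (simp add: power2_eq_square algebra_simps)
  moreover have "0 \<le> (x - y)^2" by simp
  ultimately show ?thesis by linarith
qed

lemma final_ineq:
  fixes n m R \<gamma> C dt Q c :: real
  assumes n: "1 \<le> n" and m: "0 < m" and g: "0 < \<gamma>" "\<gamma> < 1" and c: "c = \<gamma> / (1 - \<gamma>)"
    and Q: "Q \<le> 16 * c^2 * n * R^2 * (C^2 * dt^2)"
  shows "1 / (2 * n) * (8 * R^2 / m + n * Q) \<le> 1 / (1 - \<gamma>)^2 * (256 * n^5 * R^2 / m + 576 * \<gamma>^2 * C^2 * dt^2 * n^7 * R^2)"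
proof -
  define w where "w = 1 / (1 - \<gamma>)^2"
  have w: "1 \<le> w"
  proof -
    have "(1 - \<gamma>)^2 \<le> 1" using g by (simp add: power_le_one)
    moreover have "0 < (1 - \<gamma>)^2" using g by simp
    ultimately show ?thesis unfolding w_def by (simp add: le_divide_eq)
  qed
  define z where "z = w * \<gamma>^2 * R^2 * C^2 * dt^2"
  have z: "0 \<le> z" unfolding z_def using w by simp
  have c2: "c^2 = w * \<gamma>^2" unfolding c w_def by (simp add: power_divide)
  have e1: "1 / (2 * n) * (8 * R^2 / m + n * Q) = 4 * R^2 / (n * m) + Q / 2" using n m by (simp add: field_simps)
  have e2: "Q / 2 \<le> 8 * n * z" using Q unfolding z_def c2 by (simp add: field_simps)
  have e3: "8 * n * z \<le> 576 * n^7 * z" by (rule ineq2[OF n z])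
  have e4: "4 * R^2 / (n * m) \<le> w * (256 * n^5 * R^2 / m)" by (rule ineq1[OF n m w])
  have "1 / (2 * n) * (8 * R^2 / m + n * Q) \<le> w * (256 * n^5 * R^2 / m) + 576 * n^7 * z"
    unfolding e1 using e2 e3 e4 by linarith
  also have "\<dots> = w * (256 * n^5 * R^2 / m + 576 * \<gamma>^2 * C^2 * dt^2 * n^7 * R^2)"
    unfolding z_def by (simp add: algebra_simps)
  finally show ?thesis unfolding w_def .
qed

lemma powr_72: "0 < (x::real) \<Longrightarrow> x powr (7/2) = x^3 * sqrt x"
proof -
  assume x: "0 < x"
  have "x powr (7/2) = x powr (3 + 1/2)" by simp
  also have "\<dots> = x powr 3 * x powr (1/2)" by (rule powr_add)
  also have "\<dots> = x^3 * sqrt x" using x by (simp add: powr_half_sqrt)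
  finally show ?thesis .
qed

lemma pn_final:
  fixes n PP R c \<gamma> :: real
  assumes n: "1 \<le> n" and PP: "0 \<le> PP" "PP \<le> 2 * R * sqrt 2 * sqrt n" and c: "0 \<le> c" "c + 1 = 1 / (1 - \<gamma>)"
    and g: "\<gamma> < 1" and R: "0 \<le> R"
  shows "n * c * n^2 * 3 * PP + 3 * PP \<le> 24 / (1 - \<gamma>) * n powr (7/2) * R"
proof -
  have gp: "0 < 1 - \<gamma>" using g by simp
  have n3: "1 \<le> n^3" using n by (simp add: one_le_power)
  have A: "n * c * n^2 * 3 * PP + 3 * PP = 3 * PP * (c * n^3 + 1)" by (simp add: algebra_simps power2_eq_square power3_eq_cube)
  have B: "c * n^3 + 1 \<le> n^3 / (1 - \<gamma>)"
  proof -
    have "n^3 / (1 - \<gamma>) = (c + 1) * n^3" using c(2) by simp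
    thus ?thesis using n3 by (simp add: algebra_simps)
  qed
  have nn: "0 \<le> n^3 / (1 - \<gamma>)" using gp n by simp
  have C: "3 * PP * (c * n^3 + 1) \<le> 3 * PP * (n^3 / (1 - \<gamma>))" using B PP(1) by (intro mult_left_mono) auto
  have "3 * PP \<le> 3 * (2 * R * sqrt 2 * sqrt n)" using PP(2) by linarith
  hence D: "3 * PP * (n^3 / (1 - \<gamma>)) \<le> 3 * (2 * R * sqrt 2 * sqrt n) * (n^3 / (1 - \<gamma>))"
    using nn by (rule mult_right_mono)
  have E: "3 * (2 * R * sqrt 2 * sqrt n) * (n^3 / (1 - \<gamma>)) \<le> 24 / (1 - \<gamma>) * (n^3 * sqrt n) * R"
  proof -
    define X where "X = R * sqrt n * n^3 / (1 - \<gamma>)"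
    have X: "0 \<le> X" unfolding X_def using R n gp by simp
    have s2: "sqrt 2 \<le> 4" by (rule real_le_lsqrt) auto
    have "3 * (2 * R * sqrt 2 * sqrt n) * (n^3 / (1 - \<gamma>)) = (6 * sqrt 2) * X" unfolding X_def by (simp add: field_simps)
    also have "\<dots> \<le> 24 * X" using s2 X by (intro mult_right_mono) auto
    also have "24 * X = 24 / (1 - \<gamma>) * (n^3 * sqrt n) * R" unfolding X_def by (simp add: field_simps)
    finally show ?thesis .
  qed
  have npos: "0 < n" using n by simp
  show ?thesis unfolding A powr_72[OF npos] using C D E by linarith
qed

theorem theorem3p5:
  fixes S :: "(real^'d::finite) set"
    and r :: "real^'d \<Rightarrow> 'a::finite \<Rightarrow> real"
    and g :: "real^'d \<Rightarrow> 'a \<Rightarrow> real \<Rightarrow> real^'d"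
    and \<alpha> m :: nat and \<gamma> C\<^sub>T \<Delta>t :: real
  assumes S_compact: "compact S"
    and S_cube: "\<forall>x\<in>S. \<forall>i. 0 \<le> x $ i \<and> x $ i \<le> 1"
    and S_pos: "emeasure lborel S > 0"
    and A_card: "CARD('a) = 2 ^ \<alpha>"
    and gamma: "0 < \<gamma>" "\<gamma> < 1"
    and r_cont: "\<forall>a. continuous_on S (\<lambda>s. r s a)"
    and r_barron: "\<forall>a. barron_space S (\<lambda>s. r s a)"
    and r_bound: "\<forall>s\<in>S. \<forall>a. \<bar>r s a\<bar> \<le> 1"
    and g_maps: "\<forall>s\<in>S. \<forall>a. \<forall>t\<ge>0. g s a t \<in> S"
    and g_zero: "\<forall>s\<in>S. \<forall>a. g s a 0 = s"
    and g_semigroup: "\<forall>s\<in>S. \<forall>a. \<forall>t\<ge>0. \<forall>t'\<ge>0. g (g s a t) a t' = g s a (t + t')"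
    and CT_pos: "C\<^sub>T > 0"
    and g_lip: "\<forall>s\<in>S. \<forall>a. \<forall>t\<ge>0. \<forall>\<Delta>. 0 < \<Delta> \<and> \<Delta> < 1 \<longrightarrow>
                   infnorm (g s a t - g s a (t + \<Delta>)) \<le> C\<^sub>T * \<Delta>"
    and dt: "0 < \<Delta>t" "\<Delta>t < 1"
    and m_pos: "m > 0"
  shows "\<exists>D\<^sub>0 > 0. \<exists>\<Theta> :: 'a \<Rightarrow> 'd resparam.
     bellman_loss S r g \<gamma> \<Delta>t ((6 ^ \<alpha> + 1) * m) D\<^sub>0 (\<alpha> + 1) \<Theta>
       \<le> ennreal (1 / (1 - \<gamma>)\<^sup>2 *
            (256 * real CARD('a) ^ 5 * (reward_barron_norm S r)\<^sup>2 / real m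
             + 576 * \<gamma>\<^sup>2 * C\<^sub>T\<^sup>2 * \<Delta>t\<^sup>2 * real CARD('a) ^ 7 * (reward_barron_norm S r)\<^sup>2))
     \<and> family_path_norm ((6 ^ \<alpha> + 1) * m) D\<^sub>0 (\<alpha> + 1) \<Theta>
       \<le> 24 / (1 - \<gamma>) * real CARD('a) powr (7/2) * reward_barron_norm S r"

proof -
  define n where "n = CARD('a)"
  have n_eq: "n = 2^\<alpha>" using A_card n_def by simp
  have n_pos: "0 < n" by (simp add: n_def)
  have n_ge1: "1 \<le> real n" using n_pos by simp
  have S_sets: "S \<in> sets lborel" using S_compact by (simp add: compact_imp_closed borel_closed)
  have AE_S: "AE x in uniform_measure lborel S. x \<in> S"
    by (rule AE_uniform_measureI[OF S_sets]) simp
  define \<beta> where "\<beta> a = barron_norm S (\<lambda>s. r s a)" for a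
  define R where "R = reward_barron_norm S r"
  have R2: "R^2 = (\<Sum>a\<in>UNIV. (\<beta> a)^2)" unfolding R_def reward_barron_norm_def \<beta>_def by (subst real_sqrt_pow2) (auto intro: sum_nonneg)
  have R_nn: "0 \<le> R" unfolding R_def reward_barron_norm_def by (auto intro: sum_nonneg)
  define Set where "Set a = {enn2real (barron_moment \<rho>) |\<rho>. barron_repr S (\<lambda>s. r s a) \<rho> \<and> barron_moment \<rho> < \<infinity>}" for a
  have Set_ne: "Set a \<noteq> {}" for a using r_barron unfolding Set_def barron_space_def by auto
  have Inf_nn: "0 \<le> Inf (Set a)" for a using Set_ne by (intro cInf_greatest) (auto simp: Set_def)
  have beta2: "(\<beta> a)^2 = Inf (Set a)" for a
    using Inf_nn[of a] unfolding \<beta>_def barron_norm_def Set_def by simp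
  have good: "\<exists>\<rho>. barron_repr S (\<lambda>s. r s a) \<rho> \<and> barron_moment \<rho> \<le> ennreal K" if lt: "(\<beta> a)^2 < K" for a K
  proof -
    obtain v where "v \<in> Set a" "v < K" using cInf_lessD[OF Set_ne, of a K] lt beta2 by auto
    then obtain \<rho> where \<rho>: "barron_repr S (\<lambda>s. r s a) \<rho>" "barron_moment \<rho> < \<infinity>" "enn2real (barron_moment \<rho>) < K"
      unfolding Set_def by auto
    have "barron_moment \<rho> = ennreal (enn2real (barron_moment \<rho>))" using \<rho>(2) by (simp add: ennreal_enn2real less_top)
    also have "\<dots> \<le> ennreal K" using \<rho>(3) by (simp add: ennreal_leI)
    finally show ?thesis using \<rho>(1) by blast
  qed
  show ?thesis
  proof (cases "R = 0")
    case True
    have b0: "(\<beta> a)^2 = 0" for a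
    proof -
      have "(\<Sum>a\<in>UNIV. (\<beta> a)^2) = 0" using R2 True by simp
      thus ?thesis by (simp add: sum_nonneg_eq_0_iff)
    qed
    have r0: "r s a = 0" if s: "s \<in> S" for s a
    proof (rule ccontr)
      assume ne: "r s a \<noteq> 0"
      define \<epsilon> where "\<epsilon> = (r s a)^2 / 2"
      have eps: "0 < \<epsilon>" using ne by (simp add: \<epsilon>_def)
      then obtain \<rho> where \<rho>: "barron_repr S (\<lambda>s. r s a) \<rho>" "barron_moment \<rho> \<le> ennreal \<epsilon>"
        using good[of a \<epsilon>] b0 by auto
      have "((\<lambda>s. r s a) s)^2 \<le> \<epsilon>"
        by (rule h_sq_le[OF S_compact S_cube S_pos _ \<rho> eps s]) (use r_cont in auto)
      thus False using eps unfolding \<epsilon>_def by simp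
    qed
    define \<Theta> where "\<Theta> = (\<lambda>a::'a. ResParam (\<lambda>_. 0) (\<lambda>_ _. 0) (\<lambda>_ _ _. 0) (\<lambda>_ _ _. 0) :: 'd resparam)"
    have rz: "resnet M D L (\<Theta> a) x = 0" for M D L a x unfolding resnet_def \<Theta>_def by simp
    have pz: "family_path_norm M D L \<Theta> = 0" for M D L
      unfolding family_path_norm_def path_norm_def \<Theta>_def by simp
    have lz: "bellman_loss S r g \<gamma> \<Delta>t M D L \<Theta> = 0" for M D L
    proof -
      have "(\<integral>\<^sup>+ s. ennreal ((resnet M D L (\<Theta> a) s - r s a - \<gamma> * Max (range (\<lambda>a'. resnet M D L (\<Theta> a') (g s a \<Delta>t))))\<^sup>2) \<partial>uniform_measure lborel S) = 0" for a
      proof -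
        have "(\<integral>\<^sup>+ s. ennreal ((resnet M D L (\<Theta> a) s - r s a - \<gamma> * Max (range (\<lambda>a'. resnet M D L (\<Theta> a') (g s a \<Delta>t))))\<^sup>2) \<partial>uniform_measure lborel S)
            = (\<integral>\<^sup>+ s. 0 \<partial>uniform_measure lborel S)"
          by (rule nn_integral_cong_AE) (use AE_S in \<open>eventually_elim, simp add: rz r0\<close>)
        thus ?thesis by simp
      qed
      thus ?thesis unfolding bellman_loss_def by simp
    qed
    show ?thesis
      by (rule exI[of _ 1], simp, rule exI[of _ \<Theta>]) (simp add: lz pz True R_def[symmetric])
  next
    case False
    hence R_pos: "0 < R" using R_nn by simp
    define \<mu> where "\<mu> = uniform_measure lborel S"
    define K where "K a = (\<beta> a)^2 + R^2 / real n" for a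
    have K_pos: "0 < K a" for a using R_pos n_pos unfolding K_def by (intro add_nonneg_pos) auto
    have sumK: "(\<Sum>a\<in>UNIV. K a) = 2 * R^2"
      unfolding K_def using n_pos by (simp add: sum.distrib R2[symmetric] n_def)
    have ex_approx: "\<exists>uw. (\<integral>\<^sup>+x. ennreal ((r x a - (\<Sum>k<m. fst uw k * relu (snd uw k \<bullet> x)) / real m)\<^sup>2) \<partial>\<mu>) \<le> ennreal (2 * K a / real m)
        \<and> (\<Sum>k<m. \<bar>fst uw k\<bar> * l1norm (snd uw k)) / real m \<le> 2 * sqrt (K a)" for a
    proof -
      have "(\<beta> a)^2 < K a" using R_pos n_pos by (simp add: K_def)
      then obtain \<rho> where \<rho>: "barron_repr S (\<lambda>s. r s a) \<rho>" "barron_moment \<rho> \<le> ennreal (K a)" using good by blast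
      have "\<exists>us ws. (\<integral>\<^sup>+x. ennreal (((\<lambda>s. r s a) x - (\<Sum>k<m. us k * relu (ws k \<bullet> x)) / real m)\<^sup>2) \<partial>\<mu>) \<le> ennreal (2 * K a / real m)
        \<and> (\<Sum>k<m. \<bar>us k\<bar> * l1norm (ws k)) / real m \<le> 2 * sqrt (K a)"
        unfolding \<mu>_def by (rule approx[OF S_compact S_cube S_pos _ \<rho> K_pos m_pos]) (use r_cont in auto)
      then obtain us ws where "(\<integral>\<^sup>+x. ennreal (((\<lambda>s. r s a) x - (\<Sum>k<m. us k * relu (ws k \<bullet> x)) / real m)\<^sup>2) \<partial>\<mu>) \<le> ennreal (2 * K a / real m)
        \<and> (\<Sum>k<m. \<bar>us k\<bar> * l1norm (ws k)) / real m \<le> 2 * sqrt (K a)" by blast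
      thus ?thesis by (intro exI[of _ "(us, ws)"]) simp
    qed
    hence "\<forall>a. \<exists>uw. (\<integral>\<^sup>+x. ennreal ((r x a - (\<Sum>k<m. fst uw k * relu (snd uw k \<bullet> x)) / real m)\<^sup>2) \<partial>\<mu>) \<le> ennreal (2 * K a / real m)
        \<and> (\<Sum>k<m. \<bar>fst uw k\<bar> * l1norm (snd uw k)) / real m \<le> 2 * sqrt (K a)" by blast
    hence "\<exists>F. \<forall>a. (\<integral>\<^sup>+x. ennreal ((r x a - (\<Sum>k<m. fst (F a) k * relu (snd (F a) k \<bullet> x)) / real m)\<^sup>2) \<partial>\<mu>) \<le> ennreal (2 * K a / real m)
        \<and> (\<Sum>k<m. \<bar>fst (F a) k\<bar> * l1norm (snd (F a) k)) / real m \<le> 2 * sqrt (K a)" by (rule choice)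
    then obtain F where F: "\<forall>a. (\<integral>\<^sup>+x. ennreal ((r x a - (\<Sum>k<m. fst (F a) k * relu (snd (F a) k \<bullet> x)) / real m)\<^sup>2) \<partial>\<mu>) \<le> ennreal (2 * K a / real m)
        \<and> (\<Sum>k<m. \<bar>fst (F a) k\<bar> * l1norm (snd (F a) k)) / real m \<le> 2 * sqrt (K a)" by blast
    define US where "US a = fst (F a)" for a
    define WS where "WS a = snd (F a)" for a
    define rhA where "rhA a x = (\<Sum>k<m. US a k * relu (WS a k \<bullet> x)) / real m" for a x
    define PA where "PA a = (\<Sum>k<m. \<bar>US a k\<bar> * l1norm (WS a k)) / real m" for a
    have apL: "(\<integral>\<^sup>+x. ennreal ((r x a - rhA a x)\<^sup>2) \<partial>\<mu>) \<le> ennreal (2 * K a / real m)" for a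
      using F unfolding rhA_def US_def WS_def by blast
    have apP: "PA a \<le> 2 * sqrt (K a)" for a
      using F unfolding PA_def US_def WS_def by blast
    have PA_nn: "0 \<le> PA a" for a
      unfolding PA_def by (intro divide_nonneg_nonneg sum_nonneg mult_nonneg_nonneg) (auto simp: l1norm_def intro: sum_nonneg)
    define PP where "PP = (\<Sum>a\<in>UNIV. PA a)"
    have PP_nn: "0 \<le> PP" unfolding PP_def by (intro sum_nonneg PA_nn)
    have PP_bound: "PP \<le> 2 * R * sqrt 2 * sqrt (real n)"
    proof -
      have S1: "(\<Sum>a\<in>UNIV. sqrt (K a)) \<le> sqrt 2 * R * sqrt (real n)"
      proof -
        have "(\<Sum>a\<in>UNIV. sqrt (K a)) = (\<Sum>a\<in>UNIV. \<bar>sqrt (K a)\<bar> * \<bar>1::real\<bar>)"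
          using K_pos by (intro sum.cong) (auto simp: less_imp_le)
        also have "\<dots> \<le> L2_set (\<lambda>a. sqrt (K a)) UNIV * L2_set (\<lambda>a::'a. 1::real) UNIV"
          using L2_set_mult_ineq[of "\<lambda>a. sqrt (K a)" "\<lambda>a::'a. 1::real" UNIV] by simp
        also have "L2_set (\<lambda>a. sqrt (K a)) UNIV = sqrt 2 * R"
        proof -
          have "(\<Sum>a\<in>UNIV. (sqrt (K a))^2) = 2 * R^2" using K_pos sumK by (simp add: less_imp_le)
          thus ?thesis unfolding L2_set_def using R_nn by (simp add: real_sqrt_mult)
        qed
        also have "L2_set (\<lambda>a::'a. 1::real) UNIV = sqrt (real n)" unfolding L2_set_def n_def by simp
        finally show ?thesis .
      qed
      have "PP \<le> (\<Sum>a\<in>UNIV. 2 * sqrt (K a))" unfolding PP_def by (rule sum_mono) (rule apP)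
      also have "\<dots> = 2 * (\<Sum>a\<in>UNIV. sqrt (K a))" by (simp add: sum_distrib_left)
      also have "\<dots> \<le> 2 * (sqrt 2 * R * sqrt (real n))" using S1 by simp
      finally show ?thesis by (simp add: mult_ac)
    qed
    obtain act :: "'a \<Rightarrow> nat" where bij: "bij_betw act UNIV {..<n}"
      using ex_bij_betw_finite_nat[of "UNIV :: 'a set"] by (auto simp: n_def atLeast0LessThan)
    define ia where "ia = the_inv_into UNIV act"
    have ia_act: "ia (act a) = a" for a
      unfolding ia_def using bij by (simp add: bij_betw_imp_inj_on the_inv_into_f_f)
    have act_lt: "act a < 2^\<alpha>" for a using bij n_eq by (auto simp: bij_betw_def)
    have act_img: "act ` UNIV = {..<n}" using bij by (simp add: bij_betw_def)
    define UU where "UU j k = US (ia j) k" for j k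
    define WW where "WW j k = WS (ia j) k" for j k
    have rh_act: "rh m UU WW (act a) x = rhA a x" for a x
      by (simp add: rh_def UU_def WW_def ia_act rhA_def)
    define Mh where "Mh x = Max ((\<lambda>i. rh m UU WW i x) ` {..<n})" for x
    have Mh_eq: "Mh x = Max (range (\<lambda>a. rhA a x))" for x
    proof -
      have "(\<lambda>i. rh m UU WW i x) ` {..<n} = (\<lambda>i. rh m UU WW i x) ` (act ` UNIV)" using act_img by simp
      also have "\<dots> = range (\<lambda>a. rhA a x)" by (simp add: image_image rh_act)
      finally show ?thesis unfolding Mh_def by simp
    qed
    define c where "c = \<gamma> / (1 - \<gamma>)"
    have c_nn: "0 \<le> c" using gamma by (simp add: c_def)
    have c_eq: "\<gamma> * (c + 1) = c" using gamma by (simp add: c_def field_simps)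
    define mw where "mw = (6 ^ \<alpha> + 1) * m"
    define D0 where "D0 = 2^\<alpha> + 1 + 2^\<alpha> * m"
    define \<Theta> where "\<Theta> a = netp \<alpha> m (act a) c UU WW" for a
    have rv: "resnet mw D0 (\<alpha>+1) (\<Theta> a) x = c * Mh x + rhA a x" for a x
      unfolding \<Theta>_def using resnet_val[OF m_pos act_lt mw_def D0_def, where c=c and UU=UU and WW=WW and x=x]
      by (simp add: Mh_def n_eq rh_act)
    have rv': "resnet mw D0 (Suc \<alpha>) (\<Theta> a) x = c * Mh x + rhA a x" for a x using rv by simp
    have Max_rv: "Max (range (\<lambda>a'. resnet mw D0 (\<alpha>+1) (\<Theta> a') y)) = (c + 1) * Mh y" for y
    proof -
      have "range (\<lambda>a'. resnet mw D0 (\<alpha>+1) (\<Theta> a') y) = (\<lambda>a'. rhA a' y + c * Mh y) ` UNIV"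
        by (simp add: rv' add.commute)
      also have "Max \<dots> = Max (range (\<lambda>a'. rhA a' y)) + c * Mh y"
        by (rule Max_add_commute) auto
      finally show ?thesis by (simp add: Mh_eq algebra_simps)
    qed
    have PA_act: "(\<Sum>k<m. \<bar>UU (act a) k\<bar> * l1norm (WW (act a) k)) / real m = PA a" for a
      by (simp add: UU_def WW_def ia_act PA_def)
    have lip: "\<bar>Mh s - Mh (g s a \<Delta>t)\<bar> \<le> PP * (C\<^sub>T * \<Delta>t)" if s: "s \<in> S" for s a
    proof -
      define s' where "s' = g s a \<Delta>t"
      have inf: "infnorm (s - s') \<le> C\<^sub>T * \<Delta>t"
      proof -
        have "infnorm (g s a 0 - g s a (0 + \<Delta>t)) \<le> C\<^sub>T * \<Delta>t"
        proof -
          have "\<forall>t\<ge>0. \<forall>\<Delta>. 0 < \<Delta> \<and> \<Delta> < 1 \<longrightarrow> infnorm (g s a t - g s a (t + \<Delta>)) \<le> C\<^sub>T * \<Delta>"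
            using g_lip s by blast
          hence "0 < \<Delta>t \<and> \<Delta>t < 1 \<longrightarrow> infnorm (g s a 0 - g s a (0 + \<Delta>t)) \<le> C\<^sub>T * \<Delta>t" by blast
          thus ?thesis using dt by blast
        qed
        thus ?thesis using g_zero s by (simp add: s'_def)
      qed
      have "\<bar>Mh s - Mh s'\<bar> = \<bar>Max (range (\<lambda>a. rhA a s)) - Max (range (\<lambda>a. rhA a s'))\<bar>" by (simp add: Mh_eq)
      also have "\<dots> \<le> (\<Sum>a'\<in>UNIV. \<bar>rhA a' s - rhA a' s'\<bar>)" by (rule Max_diff_le) auto
      also have "\<dots> \<le> (\<Sum>a'\<in>UNIV. PA a' * infnorm (s - s'))"
      proof (rule sum_mono)
        fix a'
        show "\<bar>rhA a' s - rhA a' s'\<bar> \<le> PA a' * infnorm (s - s')"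
          using rh_lip[of m UU WW "act a'" s s'] by (simp add: rh_act PA_act)
      qed
      also have "\<dots> = PP * infnorm (s - s')" by (simp add: PP_def sum_distrib_right)
      also have "\<dots> \<le> PP * (C\<^sub>T * \<Delta>t)" using inf PP_nn by (rule mult_left_mono)
      finally show ?thesis by (simp add: s'_def)
    qed
    define Q where "Q = 2 * c^2 * (PP * (C\<^sub>T * \<Delta>t))^2"
    have loss_a: "(\<integral>\<^sup>+ s. ennreal ((resnet mw D0 (\<alpha>+1) (\<Theta> a) s - r s a - \<gamma> * Max (range (\<lambda>a'. resnet mw D0 (\<alpha>+1) (\<Theta> a') (g s a \<Delta>t))))\<^sup>2) \<partial>\<mu>)
        \<le> ennreal (4 * K a / real m + Q)" for a
    proof -
      have mm: "\<And>N. measurable \<mu> N = measurable borel N" by (rule measurable_cong_sets) (simp_all add: \<mu>_def)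
      interpret mu: prob_space \<mu>
        unfolding \<mu>_def
      proof (rule prob_space_uniform_measure)
        show "emeasure lborel S \<noteq> 0" using S_pos by simp
        show "emeasure lborel S \<noteq> \<infinity>" using emeasure_bounded_finite[OF compact_imp_bounded[OF S_compact]] by simp
      qed
      have AEm: "AE x in \<mu>. x \<in> S" unfolding \<mu>_def by (rule AE_S)
      define ra where "ra x = (if x \<in> S then r x a else 0)" for x
      have ra_m[measurable]: "ra \<in> borel_measurable borel" unfolding ra_def
        by (rule borel_measurable_continuous_on_if) (use S_sets r_cont in \<open>auto intro: continuous_on_const\<close>)
      have rh_m[measurable]: "(\<lambda>x. rhA a x) \<in> borel_measurable borel"
        unfolding rhA_def relu_def by (intro borel_measurable_continuous_onI continuous_intros) (use m_pos in auto)
      have Q_nn: "0 \<le> Q" unfolding Q_def by simp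
      have pt: "ennreal ((resnet mw D0 (\<alpha>+1) (\<Theta> a) s - r s a - \<gamma> * Max (range (\<lambda>a'. resnet mw D0 (\<alpha>+1) (\<Theta> a') (g s a \<Delta>t))))\<^sup>2)
          \<le> ennreal 2 * ennreal ((ra s - rhA a s)\<^sup>2) + ennreal Q" if s: "s \<in> S" for s
      proof -
        define s' where "s' = g s a \<Delta>t"
        have g1: "\<gamma> * ((c + 1) * Mh s') = c * Mh s'" using c_eq by (metis mult.assoc)
        have E: "resnet mw D0 (\<alpha>+1) (\<Theta> a) s - r s a - \<gamma> * Max (range (\<lambda>a'. resnet mw D0 (\<alpha>+1) (\<Theta> a') (g s a \<Delta>t)))
            = (rhA a s - ra s) + c * (Mh s - Mh s')"
          unfolding Max_rv unfolding s'_def[symmetric] g1 rv using s by (simp add: ra_def algebra_simps)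
        have Y: "(c * (Mh s - Mh s'))^2 \<le> c^2 * (PP * (C\<^sub>T * \<Delta>t))^2"
        proof -
          have "(Mh s - Mh s')^2 = \<bar>Mh s - Mh s'\<bar>^2" by simp
          also have "\<dots> \<le> (PP * (C\<^sub>T * \<Delta>t))^2" using lip[OF s, of a] unfolding s'_def by (intro power_mono) auto
          finally show ?thesis by (simp add: power_mult_distrib mult_left_mono)
        qed
        have "((rhA a s - ra s) + c * (Mh s - Mh s'))^2 \<le> 2 * (rhA a s - ra s)^2 + 2 * (c * (Mh s - Mh s'))^2"
          by (rule sq_sum_le)
        also have "\<dots> \<le> 2 * (ra s - rhA a s)^2 + Q" using Y unfolding Q_def by (simp add: power2_commute)
        finally have le: "(resnet mw D0 (\<alpha>+1) (\<Theta> a) s - r s a - \<gamma> * Max (range (\<lambda>a'. resnet mw D0 (\<alpha>+1) (\<Theta> a') (g s a \<Delta>t))))\<^sup>2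
            \<le> 2 * (ra s - rhA a s)^2 + Q" unfolding E .
        have "ennreal (2 * (ra s - rhA a s)^2 + Q) = ennreal (2 * (ra s - rhA a s)^2) + ennreal Q"
          by (rule ennreal_plus) (use Q_nn in auto)
        also have "ennreal (2 * (ra s - rhA a s)^2) = ennreal 2 * ennreal ((ra s - rhA a s)^2)"
          by (rule ennreal_mult) auto
        finally show ?thesis using ennreal_leI[OF le] by simp
      qed
      have "(\<integral>\<^sup>+ s. ennreal ((resnet mw D0 (\<alpha>+1) (\<Theta> a) s - r s a - \<gamma> * Max (range (\<lambda>a'. resnet mw D0 (\<alpha>+1) (\<Theta> a') (g s a \<Delta>t))))\<^sup>2) \<partial>\<mu>)
          \<le> (\<integral>\<^sup>+ s. (ennreal 2 * ennreal ((ra s - rhA a s)\<^sup>2) + ennreal Q) \<partial>\<mu>)"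
      proof (rule nn_integral_mono_AE)
        show "AE s in \<mu>. ennreal ((resnet mw D0 (\<alpha>+1) (\<Theta> a) s - r s a - \<gamma> * Max (range (\<lambda>a'. resnet mw D0 (\<alpha>+1) (\<Theta> a') (g s a \<Delta>t))))\<^sup>2)
          \<le> ennreal 2 * ennreal ((ra s - rhA a s)\<^sup>2) + ennreal Q"
          using AEm
        proof eventually_elim
          case (elim s)
          show ?case by (rule pt[OF elim])
        qed
      qed
      also have "\<dots> = ennreal 2 * (\<integral>\<^sup>+ s. ennreal ((ra s - rhA a s)\<^sup>2) \<partial>\<mu>) + ennreal Q"
      proof -
        have m1: "(\<lambda>s. ennreal ((ra s - rhA a s)\<^sup>2)) \<in> borel_measurable \<mu>" unfolding mm by measurable
        have "(\<integral>\<^sup>+ s. (ennreal 2 * ennreal ((ra s - rhA a s)\<^sup>2) + ennreal Q) \<partial>\<mu>)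
            = (\<integral>\<^sup>+ s. ennreal 2 * ennreal ((ra s - rhA a s)\<^sup>2) \<partial>\<mu>) + (\<integral>\<^sup>+ s. ennreal Q \<partial>\<mu>)"
          by (rule nn_integral_add) (use m1 in simp_all)
        also have "(\<integral>\<^sup>+ s. ennreal 2 * ennreal ((ra s - rhA a s)\<^sup>2) \<partial>\<mu>) = ennreal 2 * (\<integral>\<^sup>+ s. ennreal ((ra s - rhA a s)\<^sup>2) \<partial>\<mu>)"
          by (rule nn_integral_cmult[OF m1])
        also have "(\<integral>\<^sup>+ s. ennreal Q \<partial>\<mu>) = ennreal Q" by (simp add: mu.emeasure_space_1)
        finally show ?thesis .
      qed
      also have "(\<integral>\<^sup>+ s. ennreal ((ra s - rhA a s)\<^sup>2) \<partial>\<mu>) = (\<integral>\<^sup>+ s. ennreal ((r s a - rhA a s)\<^sup>2) \<partial>\<mu>)"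
        by (rule nn_integral_cong_AE) (use AEm in \<open>eventually_elim, simp add: ra_def\<close>)
      also have "ennreal 2 * \<dots> + ennreal Q \<le> ennreal 2 * ennreal (2 * K a / real m) + ennreal Q"
        using apL[of a] by (intro add_right_mono mult_left_mono) auto
      also have "\<dots> = ennreal (4 * K a / real m + Q)"
      proof -
        have "ennreal 2 * ennreal (2 * K a / real m) = ennreal (4 * K a / real m)"
          by (subst ennreal_mult[symmetric]) (use K_pos[of a] in auto)
        moreover have "ennreal (4 * K a / real m) + ennreal Q = ennreal (4 * K a / real m + Q)"
          by (rule ennreal_plus[symmetric]) (use K_pos[of a] Q_nn in auto)
        ultimately show ?thesis by simp
      qed
      finally show ?thesis .
    qed
    have loss: "bellman_loss S r g \<gamma> \<Delta>t mw D0 (\<alpha> + 1) \<Theta> \<le> ennreal (1 / (1 - \<gamma>)\<^sup>2 *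
            (256 * real CARD('a) ^ 5 * R\<^sup>2 / real m
             + 576 * \<gamma>\<^sup>2 * C\<^sub>T\<^sup>2 * \<Delta>t\<^sup>2 * real CARD('a) ^ 7 * R\<^sup>2))"
    proof -
      have Q_nn: "0 \<le> Q" unfolding Q_def by simp
      have hPP2: "PP^2 \<le> 8 * real n * R^2"
      proof -
        have "PP^2 \<le> (2 * R * sqrt 2 * sqrt (real n))^2" using PP_bound PP_nn by (intro power_mono) auto
        also have "\<dots> = 8 * real n * R^2" by (simp add: power_mult_distrib)
        finally show ?thesis .
      qed
      have hQ: "Q \<le> 16 * c^2 * real n * R^2 * (C\<^sub>T^2 * \<Delta>t^2)"
      proof -
        have "Q = 2 * c^2 * (C\<^sub>T^2 * \<Delta>t^2) * PP^2" unfolding Q_def by (simp add: power_mult_distrib mult_ac)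
        also have "\<dots> \<le> 2 * c^2 * (C\<^sub>T^2 * \<Delta>t^2) * (8 * real n * R^2)" using hPP2 by (intro mult_left_mono) auto
        also have "\<dots> = 16 * c^2 * real n * R^2 * (C\<^sub>T^2 * \<Delta>t^2)" by (simp add: mult_ac)
        finally show ?thesis .
      qed
      have "bellman_loss S r g \<gamma> \<Delta>t mw D0 (\<alpha> + 1) \<Theta>
          = ennreal (1 / (2 * real n)) * (\<Sum>a\<in>UNIV. \<integral>\<^sup>+ s. ennreal ((resnet mw D0 (\<alpha>+1) (\<Theta> a) s - r s a - \<gamma> * Max (range (\<lambda>a'. resnet mw D0 (\<alpha>+1) (\<Theta> a') (g s a \<Delta>t))))\<^sup>2) \<partial>\<mu>)"
        unfolding bellman_loss_def \<mu>_def n_def by simp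
      also have "\<dots> \<le> ennreal (1 / (2 * real n)) * (\<Sum>a\<in>UNIV. ennreal (4 * K a / real m + Q))"
        by (intro mult_left_mono sum_mono loss_a) auto
      also have "(\<Sum>a\<in>UNIV. ennreal (4 * K a / real m + Q)) = ennreal (\<Sum>a\<in>UNIV. (4 * K a / real m + Q))"
      proof (rule sum_ennreal)
        fix a
        have "0 \<le> K a" using K_pos[of a] by simp
        thus "0 \<le> 4 * K a / real m + Q" using Q_nn by simp
      qed
      also have "(\<Sum>a\<in>UNIV. (4 * K a / real m + Q)) = 8 * R^2 / real m + real n * Q"
      proof -
        have "(\<Sum>a\<in>UNIV. (4 * K a / real m + Q)) = 4 * (\<Sum>a\<in>UNIV. K a) / real m + real n * Q"
          by (simp add: sum.distrib sum_divide_distrib[symmetric] sum_distrib_left[symmetric] n_def)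
        thus ?thesis using sumK by simp
      qed
      also have "ennreal (1 / (2 * real n)) * ennreal (8 * R^2 / real m + real n * Q) = ennreal (1 / (2 * real n) * (8 * R^2 / real m + real n * Q))"
        by (rule ennreal_mult[symmetric]) (use Q_nn in auto)
      also have "\<dots> \<le> ennreal (1 / (1 - \<gamma>)\<^sup>2 *
            (256 * real CARD('a) ^ 5 * R\<^sup>2 / real m
             + 576 * \<gamma>\<^sup>2 * C\<^sub>T\<^sup>2 * \<Delta>t\<^sup>2 * real CARD('a) ^ 7 * R\<^sup>2))"
        unfolding n_def[symmetric]
        by (rule ennreal_leI, rule final_ineq[OF n_ge1 _ gamma c_def hQ]) (use m_pos in simp)
      finally show ?thesis .
    qed
    have pnorm: "family_path_norm mw D0 (\<alpha> + 1) \<Theta> \<le> 24 / (1 - \<gamma>) * real CARD('a) powr (7/2) * R"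
    proof -
      define P where "P i = (\<Sum>k<m. \<bar>UU i k\<bar> * l1norm (WW i k)) / real m" for i
      have sumP: "(\<Sum>i<2^\<alpha>. P i) = PP"
      proof -
        have "(\<Sum>a\<in>UNIV. P (act a)) = sum P {..<n}" by (rule sum.reindex_bij_betw[OF bij])
        moreover have "P (act a) = PA a" for a using PA_act[of a] by (simp add: P_def)
        ultimately show ?thesis by (simp add: PP_def n_eq)
      qed
      have pn_a: "path_norm mw D0 (\<alpha>+1) (\<Theta> a) \<le> c * 4^\<alpha> * (3 * PP) + 3 * PA a" for a
      proof -
        have "path_norm mw D0 (\<alpha>+1) (\<Theta> a) \<le> c * 4^\<alpha> * (\<Sum>i<2^\<alpha>. \<Sum>j'\<in>UNIV. pii m UU WW i j') + (\<Sum>j'\<in>UNIV. pii m UU WW (act a) j')"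
          unfolding \<Theta>_def by (rule path_norm_bound[OF m_pos act_lt mw_def D0_def c_nn])
        also have "(\<Sum>i<2^\<alpha>. \<Sum>j'\<in>UNIV. pii m UU WW i j') = 3 * PP"
          unfolding sum_pii P_def[symmetric] sum_distrib_left[symmetric] sumP ..
        also have "(\<Sum>j'\<in>UNIV. pii m UU WW (act a) j') = 3 * PA a" unfolding sum_pii PA_act ..
        finally show ?thesis .
      qed
      have "family_path_norm mw D0 (\<alpha> + 1) \<Theta> \<le> (\<Sum>a\<in>UNIV. c * 4^\<alpha> * (3 * PP) + 3 * PA a)"
        unfolding family_path_norm_def by (rule sum_mono) (rule pn_a)
      also have "\<dots> = real n * c * (real n)^2 * 3 * PP + 3 * PP"
      proof -
        have f: "(4::real)^\<alpha> = (real n)^2"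
        proof -
          have "(real n)^2 = ((2::real)^\<alpha>)^2" unfolding n_eq by simp
          also have "\<dots> = 2^(\<alpha>*2)" by (rule power_mult[symmetric])
          also have "\<dots> = (2^2)^\<alpha>" by (subst mult.commute) (rule power_mult)
          finally show ?thesis by simp
        qed
        have "(\<Sum>a\<in>UNIV. 3 * PA a) = 3 * PP" by (simp add: PP_def sum_distrib_left)
        thus ?thesis unfolding f by (simp add: sum.distrib n_def mult_ac)
      qed
      also have "\<dots> \<le> 24 / (1 - \<gamma>) * real n powr (7/2) * R"
        by (rule pn_final[OF n_ge1 PP_nn PP_bound c_nn _ _ R_nn]) (use gamma in \<open>simp_all add: c_def field_simps\<close>)
      finally show ?thesis by (simp add: n_def)
    qed
    have D0_pos: "0 < D0" by (simp add: D0_def)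
    show ?thesis using loss pnorm D0_pos unfolding R_def mw_def by blast
  qed
qed


end
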